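(* Let $u_0(x)=\tanh(x/\sqrt2)$. For any $c\in\mathbb{R}$ and any real $u\in H^2(\mathbb{R})$, $$\langle K_+(c)u,u\rangle_{L^2}=\|w_x\|^2_{L^2}+(3-c)\|w\|^2_{L^2},\qquad w=u_x+\sqrt2\,u_0u\in H^1(\mathbb{R}).$$
   Context: Here $\mathcal{E}=0$ and $K_+(c)=M_+-cL_+$ with $L_+u=-u''+(3u_0^2-1)u$ and $M_+u=u''''-5(u_0^2u')'+(-5u_0^4+15u_0^2-4)u$; its quadratic form on $H^2(\mathbb{R})$ is $\langle K_+(c)u,u\rangle_{L^2}=\int[u_{xx}^2+5u_0^2u_x^2+(-5u_0^4+15u_0^2-4)u^2]\,dx-c\int[u_x^2+(3u_0^2-1)u^2]\,dx$. *)

theory Defs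
  imports "HOL-Analysis.Analysis"
begin

definition u0 :: "real \<Rightarrow> real" where
  "u0 x = tanh (x / sqrt 2)"

definition L2 :: "(real \<Rightarrow> real) \<Rightarrow> bool" where
  "L2 f \<longleftrightarrow> f \<in> borel_measurable lborel \<and> integrable lborel (\<lambda>x. (f x)^2)"

definition test_fun :: "(real \<Rightarrow> real) \<Rightarrow> bool" where
  "test_fun \<phi> \<longleftrightarrow> (\<forall>k x. ((deriv ^^ k) \<phi>) differentiable (at x))
                 \<and> (\<exists>R. \<forall>x. \<bar>x\<bar> > R \<longrightarrow> \<phi> x = 0)"

definition weak_deriv :: "(real \<Rightarrow> real) \<Rightarrow> (real \<Rightarrow> real) \<Rightarrow> bool" where
  "weak_deriv u v \<longleftrightarrow>
     (\<forall>a b. set_integrable lborel {a..b} u \<and> set_integrable lborel {a..b} v)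
   \<and> (\<forall>\<phi>. test_fun \<phi> \<longrightarrow>
        (\<integral>x. u x * deriv \<phi> x \<partial>lborel) = - (\<integral>x. v x * \<phi> x \<partial>lborel))"

definition H1 :: "(real \<Rightarrow> real) \<Rightarrow> (real \<Rightarrow> real) \<Rightarrow> bool" where
  "H1 u u1 \<longleftrightarrow> L2 u \<and> L2 u1 \<and> weak_deriv u u1"

definition H2 :: "(real \<Rightarrow> real) \<Rightarrow> (real \<Rightarrow> real) \<Rightarrow> (real \<Rightarrow> real) \<Rightarrow> bool" where
  "H2 u u1 u2 \<longleftrightarrow> L2 u \<and> L2 u1 \<and> L2 u2 \<and> weak_deriv u u1 \<and> weak_deriv u1 u2"

text \<open>Quadratic form <K_+(c)u,u> for u in H^2 with u_x = u1, u_xx = u2.\<close>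
definition Kplus_form :: "real \<Rightarrow> (real \<Rightarrow> real) \<Rightarrow> (real \<Rightarrow> real) \<Rightarrow> (real \<Rightarrow> real) \<Rightarrow> real" where
  "Kplus_form c u u1 u2 =
     (\<integral>x. (u2 x)^2 + 5 * (u0 x)^2 * (u1 x)^2
            + (- 5 * (u0 x)^4 + 15 * (u0 x)^2 - 4) * (u x)^2 \<partial>lborel)
   - c * (\<integral>x. (u1 x)^2 + (3 * (u0 x)^2 - 1) * (u x)^2 \<partial>lborel)"

end

theory Submission
  imports Defs "HOL-Computational_Algebra.Polynomial"
begin


definition smooth_n :: "nat \<Rightarrow> (real \<Rightarrow> real) \<Rightarrow> bool" where
 "smooth_n n f \<longleftrightarrow> (\<forall>k\<le>n. \<forall>x. (deriv ^^ k) f differentiable (at x))"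

definition smooth :: "(real\<Rightarrow>real) \<Rightarrow> bool" where
 "smooth f \<longleftrightarrow> (\<forall>k x. (deriv ^^ k) f differentiable (at x))"

lemma smooth_iff: "smooth f \<longleftrightarrow> (\<forall>n. smooth_n n f)"
  unfolding smooth_def smooth_n_def by auto

lemma smooth_n_Suc_I:
  assumes d: "\<And>x. (f has_real_derivative f' x) (at x)" and s: "smooth_n n f'"
  shows "smooth_n (Suc n) f"
proof -
  have df: "deriv f = f'" using d DERIV_imp_deriv by (intro ext) blast
  show ?thesis unfolding smooth_n_def
  proof (intro allI impI)
    fix k x assume k: "k \<le> Suc n"
    show "(deriv^^k) f differentiable at x"
    proof (cases k)
      case 0 then show ?thesis using d real_differentiable_def by auto
    next
      case (Suc j)
      then have "(deriv^^k) f = (deriv^^j) f'" by (simp add: funpow_Suc_right df del: funpow.simps)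
      then show ?thesis using s k Suc unfolding smooth_n_def by auto
    qed
  qed
qed

lemma smooth_n_Suc_D:
  assumes "smooth_n (Suc n) f"
  shows "\<And>x. (f has_real_derivative deriv f x) (at x)" "smooth_n n (deriv f)"
proof -
  fix x
  have "(deriv^^0) f differentiable at x" using assms unfolding smooth_n_def by blast
  then show "(f has_real_derivative deriv f x) (at x)"
    using DERIV_deriv_iff_real_differentiable by auto
next
  show "smooth_n n (deriv f)" unfolding smooth_n_def
  proof (intro allI impI)
    fix k x assume "k \<le> n"
    have "(deriv^^(Suc k)) f differentiable at x" using assms \<open>k\<le>n\<close> unfolding smooth_n_def by auto
    then show "(deriv^^k) (deriv f) differentiable at x"
      by (simp add: funpow_Suc_right del: funpow.simps)
  qed
qed

lemma smooth_n_0: "smooth_n 0 f \<longleftrightarrow> (\<forall>x. f differentiable at x)"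
  unfolding smooth_n_def by auto

lemma smooth_n_0_I: "(\<And>x. (f has_real_derivative f' x) (at x)) \<Longrightarrow> smooth_n 0 f"
  unfolding smooth_n_0 real_differentiable_def by (intro allI exI) assumption

lemma smooth_deriv: "smooth f \<Longrightarrow> smooth (deriv f)"
  unfolding smooth_iff using smooth_n_Suc_D(2) by blast

lemma smooth_has_deriv: "smooth f \<Longrightarrow> (f has_real_derivative deriv f x) (at x)"
  unfolding smooth_iff using smooth_n_Suc_D(1) by blast

lemma smooth_I:
  assumes "\<And>x. (f has_real_derivative f' x) (at x)" "smooth f'"
  shows "smooth f"
  using assms smooth_n_Suc_I smooth_iff
  by (metis le_add2 plus_1_eq_Suc smooth_n_def)

lemma smooth_n_add: "smooth_n n f \<Longrightarrow> smooth_n n g \<Longrightarrow> smooth_n n (\<lambda>x. f x + g x)"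
proof (induction n arbitrary: f g)
  case 0 then show ?case by (auto simp: smooth_n_0)
next
  case (Suc n)
  show ?case
  proof (rule smooth_n_Suc_I)
    show "((\<lambda>x. f x + g x) has_real_derivative deriv f x + deriv g x) (at x)" for x
      using smooth_n_Suc_D(1)[OF Suc.prems(1)] smooth_n_Suc_D(1)[OF Suc.prems(2)]
      by (auto intro!: derivative_eq_intros)
    show "smooth_n n (\<lambda>x. deriv f x + deriv g x)"
      using Suc.IH smooth_n_Suc_D(2) Suc.prems by blast
  qed
qed

lemma smooth_n_cmult: "smooth_n n f \<Longrightarrow> smooth_n n (\<lambda>x. c * f x)"
proof (induction n arbitrary: f)
  case 0 then show ?case by (auto simp: smooth_n_0)
next
  case (Suc n)
  show ?case
  proof (rule smooth_n_Suc_I)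
    show "((\<lambda>x. c * f x) has_real_derivative c * deriv f x) (at x)" for x
      using smooth_n_Suc_D(1)[OF Suc.prems(1)] by (auto intro!: derivative_eq_intros)
    show "smooth_n n (\<lambda>x. c * deriv f x)"
      using Suc.IH smooth_n_Suc_D(2) Suc.prems by blast
  qed
qed

lemma smooth_add: "smooth f \<Longrightarrow> smooth g \<Longrightarrow> smooth (\<lambda>x. f x + g x)"
  by (simp add: smooth_iff smooth_n_add)
lemma smooth_cmult: "smooth f \<Longrightarrow> smooth (\<lambda>x. c * f x)"
  by (simp add: smooth_iff smooth_n_cmult)

lemma smooth_n_const: "smooth_n n (\<lambda>x. c)"
proof (induction n arbitrary: c)
  case 0 then show ?case by (auto simp: smooth_n_0)
next
  case (Suc n)
  show ?case by (rule smooth_n_Suc_I[where f'="\<lambda>x. 0"]) (auto intro!: derivative_eq_intros Suc.IH)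
qed

lemma smooth_const: "smooth (\<lambda>x. c)" by (simp add: smooth_iff smooth_n_const)

lemma smooth_id: "smooth (\<lambda>x. x)"
  by (rule smooth_I[where f'="\<lambda>x. 1"]) (auto intro!: derivative_eq_intros smooth_const)

lemma smooth_n_mult: "smooth f \<Longrightarrow> smooth g \<Longrightarrow> smooth_n n (\<lambda>x. f x * g x)"
proof (induction n arbitrary: f g)
  case 0 show ?case
    apply (rule smooth_n_0_I[where f'="\<lambda>x. deriv f x * g x + f x * deriv g x"])
    using smooth_has_deriv[OF 0(1)] smooth_has_deriv[OF 0(2)]
    by (auto intro!: derivative_eq_intros)
next
  case (Suc n)
  show ?case
  proof (rule smooth_n_Suc_I)
    show "((\<lambda>x. f x * g x) has_real_derivative deriv f x * g x + f x * deriv g x) (at x)" for x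
      using smooth_has_deriv[OF Suc.prems(1)] smooth_has_deriv[OF Suc.prems(2)]
      by (auto intro!: derivative_eq_intros)
    have "smooth_n n (\<lambda>x. deriv f x * g x)" using Suc.IH[OF smooth_deriv[OF Suc.prems(1)] Suc.prems(2)] .
    moreover have "smooth_n n (\<lambda>x. f x * deriv g x)" using Suc.IH[OF Suc.prems(1) smooth_deriv[OF Suc.prems(2)]] .
    ultimately show "smooth_n n (\<lambda>x. deriv f x * g x + f x * deriv g x)"
      by (rule smooth_n_add)
  qed
qed

lemma smooth_mult: "smooth f \<Longrightarrow> smooth g \<Longrightarrow> smooth (\<lambda>x. f x * g x)"
  by (simp add: smooth_iff smooth_n_mult)

lemma affine_deriv:
  assumes "smooth f"
  shows "((\<lambda>x. f (a * x + b)) has_real_derivative a * deriv f (a*x+b)) (at x)"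
proof -
  have 1: "((\<lambda>x. a*x+b) has_real_derivative a) (at x)" by (auto intro!: derivative_eq_intros)
  have "((\<lambda>x. f (a * x + b)) has_real_derivative deriv f (a*x+b) * a) (at x)"
    by (rule DERIV_chain2[OF smooth_has_deriv[OF assms] 1])
  then show ?thesis by (simp add: mult.commute)
qed

lemma smooth_n_affine: "smooth f \<Longrightarrow> smooth_n n (\<lambda>x. f (a * x + b))"
proof (induction n arbitrary: f)
  case 0 show ?case
    by (rule smooth_n_0_I[OF affine_deriv[OF 0(1)]])
next
  case (Suc n)
  show ?case
  proof (rule smooth_n_Suc_I)
    show "((\<lambda>x. f (a * x + b)) has_real_derivative a * deriv f (a*x+b)) (at x)" for x
      by (rule affine_deriv[OF Suc.prems(1)])
    show "smooth_n n (\<lambda>x. a * deriv f (a*x+b))"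
      using Suc.IH[OF smooth_deriv[OF Suc.prems(1)]] by (rule smooth_n_cmult)
  qed
qed

lemma smooth_affine: "smooth f \<Longrightarrow> smooth (\<lambda>x. f (a * x + b))"
  by (simp add: smooth_iff smooth_n_affine)

lemma smooth_n_div: "smooth f \<Longrightarrow> smooth g \<Longrightarrow> (\<And>x. g x \<noteq> 0) \<Longrightarrow> smooth_n n (\<lambda>x. f x / g x)"
proof (induction n arbitrary: f g)
  case 0 show ?case
    apply (rule smooth_n_0_I[where f'="\<lambda>x. (deriv f x * g x - f x * deriv g x) / (g x * g x)"])
    by (rule DERIV_divide[OF smooth_has_deriv[OF 0(1)] smooth_has_deriv[OF 0(2)] 0(3)])
next
  case (Suc n)
  show ?case
  proof (rule smooth_n_Suc_I)
    show "((\<lambda>x. f x / g x) has_real_derivative (deriv f x * g x - f x * deriv g x) / (g x * g x)) (at x)" for x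
      by (rule DERIV_divide[OF smooth_has_deriv[OF Suc.prems(1)] smooth_has_deriv[OF Suc.prems(2)] Suc.prems(3)])
    have "smooth (\<lambda>x. deriv f x * g x - f x * deriv g x)"
      using smooth_add[OF smooth_mult[OF smooth_deriv[OF Suc.prems(1)] Suc.prems(2)]
           smooth_cmult[OF smooth_mult[OF Suc.prems(1) smooth_deriv[OF Suc.prems(2)]], of "-1"]] by simp
    moreover have "smooth (\<lambda>x. g x * g x)" using smooth_mult Suc.prems by blast
    moreover have "\<And>x. g x * g x \<noteq> 0" using Suc.prems(3) by simp
    ultimately show "smooth_n n (\<lambda>x. (deriv f x * g x - f x * deriv g x) / (g x * g x))"
      by (rule Suc.IH)
  qed
qed

lemma smooth_div: "smooth f \<Longrightarrow> smooth g \<Longrightarrow> (\<And>x. g x \<noteq> 0) \<Longrightarrow> smooth (\<lambda>x. f x / g x)"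
  by (simp add: smooth_iff smooth_n_div)



definition GP :: "real poly \<Rightarrow> real \<Rightarrow> real" where
  "GP P x = (if 0 < x then poly P (1/x) * exp (-1/x) else 0)"

lemma poly_exp_lim: fixes P :: "real poly" shows "((\<lambda>t. poly P t * exp (-t)) \<longlongrightarrow> 0) at_top"
proof -
  have "((\<lambda>t. \<Sum>i\<le>degree P. coeff P i * (t^i / exp t)) \<longlongrightarrow> (\<Sum>i\<le>degree P. coeff P i * 0)) at_top"
    by (intro tendsto_sum tendsto_mult tendsto_const tendsto_power_div_exp_0)
  moreover have "(\<Sum>i\<le>degree P. coeff P i * (t^i / exp t)) = poly P t * exp (-t)" for t
    by (simp add: poly_altdef exp_minus sum_distrib_right divide_inverse mult.assoc)
  ultimately show ?thesis by simp
qed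

lemma GP_quot_lim: "((\<lambda>h. GP P h / h) \<longlongrightarrow> 0) (at 0)"
proof (rule filterlim_split_at)
  have "eventually (\<lambda>h. h < 0) (at_left (0::real))" by (auto simp: eventually_at_filter)
  then have "eventually (\<lambda>h. 0 = GP P h / h) (at_left (0::real))"
    by eventually_elim (simp add: GP_def)
  then show "((\<lambda>h. GP P h / h) \<longlongrightarrow> 0) (at_left 0)"
    by (rule tendsto_cong[THEN iffD1]) simp
next
  have "((\<lambda>h. poly (pCons 0 P) (inverse h) * exp (- inverse h)) \<longlongrightarrow> 0) (at_right 0)"
    by (rule filterlim_compose[OF poly_exp_lim filterlim_inverse_at_top_right])
  moreover have "eventually (\<lambda>h. h > 0) (at_right (0::real))" by (rule eventually_at_right_less)
  then have "eventually (\<lambda>h. poly (pCons 0 P) (inverse h) * exp (- inverse h) = GP P h / h) (at_right (0::real))"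
    by eventually_elim (simp add: GP_def field_simps)
  ultimately show "((\<lambda>h. GP P h / h) \<longlongrightarrow> 0) (at_right 0)"
    by (rule tendsto_cong[THEN iffD1, rotated])
qed

definition GQ :: "real poly \<Rightarrow> real poly" where
  "GQ P = [:0,0,1:] * (P - pderiv P)"

lemma GP_deriv: "(GP P has_real_derivative GP (GQ P) x) (at x)"
proof (cases "x > 0")
  case True
  have d1: "((\<lambda>y. 1/y) has_real_derivative -1/x^2) (at x)"
    using True by (auto intro!: derivative_eq_intros simp: power2_eq_square)
  have d2: "((\<lambda>y. poly P (1/y)) has_real_derivative poly (pderiv P) (1/x) * (-1/x^2)) (at x)"
    by (rule DERIV_chain2[OF poly_DERIV d1])
  have d3: "((\<lambda>y. exp (-1/y)) has_real_derivative exp (-1/x) * (1/x^2)) (at x)"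
    using True by (auto intro!: derivative_eq_intros simp: power2_eq_square)
  have d4: "((\<lambda>y. poly P (1/y) * exp (-1/y)) has_real_derivative
      poly (pderiv P) (1/x) * (-1/x^2) * exp (-1/x) + exp (-1/x) * (1/x^2) * poly P (1/x)) (at x)"
    by (rule DERIV_mult[OF d2 d3])
  have eq: "poly (pderiv P) (1/x) * (-1/x^2) * exp (-1/x) + exp (-1/x) * (1/x^2) * poly P (1/x)
      = GP (GQ P) x"
    using True by (simp add: GP_def GQ_def algebra_simps power2_eq_square)
  show ?thesis
    by (rule has_field_derivative_transform_within_open[OF d4[unfolded eq], of "{0<..}"])
       (use True in \<open>auto simp: GP_def\<close>)
next
  case False
  show ?thesis
  proof (cases "x < 0")
    case True
    have "((\<lambda>y. 0) has_real_derivative GP (GQ P) x) (at x)" using True by (simp add: GP_def)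
    then show ?thesis
      by (rule has_field_derivative_transform_within_open[of _ _ _ "{..<0}"])
         (use True in \<open>auto simp: GP_def\<close>)
  next
    case False
    with \<open>\<not> x > 0\<close> have x: "x = 0" by simp
    show ?thesis unfolding x has_field_derivative_iff
      using GP_quot_lim[of P] by (simp add: GP_def)
  qed
qed

lemma GP_smooth_n: "smooth_n n (GP P)"
proof (induction n arbitrary: P)
  case 0 show ?case by (rule smooth_n_0_I[OF GP_deriv])
next
  case (Suc n) show ?case by (rule smooth_n_Suc_I[OF GP_deriv Suc.IH])
qed

lemma GP_smooth: "smooth (GP P)"
  by (simp add: smooth_iff GP_smooth_n)

definition EE :: "real \<Rightarrow> real" where "EE x = (if 0 < x then exp (-1/x) else 0)"

lemma EE_GP: "EE = GP 1" by (auto simp: EE_def GP_def)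
lemma EE_smooth: "smooth EE" by (simp add: EE_GP GP_smooth)
lemma EE_pos: "x > 0 \<Longrightarrow> EE x > 0" by (simp add: EE_def)
lemma EE_zero: "x \<le> 0 \<Longrightarrow> EE x = 0" by (simp add: EE_def)
lemma EE_nonneg: "EE x \<ge> 0" by (simp add: EE_def)

definition HH :: "real \<Rightarrow> real" where "HH t = EE t / (EE t + EE (1 - t))"

lemma HH_den: "EE t + EE (1 - t) > 0"
proof (cases "t > 0")
  case True then show ?thesis using EE_pos[of t] EE_nonneg[of "1-t"] by simp
next
  case False then show ?thesis using EE_pos[of "1-t"] EE_nonneg[of t] by simp
qed

lemma HH_smooth: "smooth HH"
proof -
  have "smooth (\<lambda>t. EE ((-1) * t + 1))" by (rule smooth_affine[OF EE_smooth])
  then have s: "smooth (\<lambda>t. EE (1 - t))" by simp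
  show ?thesis unfolding HH_def[abs_def]
    by (rule smooth_div[OF EE_smooth smooth_add[OF EE_smooth s]]) (use HH_den in \<open>auto simp: less_le\<close>)
qed

lemma HH_0: "t \<le> 0 \<Longrightarrow> HH t = 0" by (simp add: HH_def EE_zero)
lemma HH_1: "t \<ge> 1 \<Longrightarrow> HH t = 1" using HH_den[of t] by (simp add: HH_def EE_zero)
lemma HH_bounds: "0 \<le> HH t" "HH t \<le> 1"
  using HH_den[of t] EE_nonneg[of t] EE_nonneg[of "1-t"] by (auto simp: HH_def divide_simps)



lemma test_fun_smooth: "test_fun \<phi> \<Longrightarrow> smooth \<phi>"
  unfolding test_fun_def smooth_def by blast

lemma test_funI: "smooth \<phi> \<Longrightarrow> (\<And>x. \<bar>x\<bar> > R \<Longrightarrow> \<phi> x = 0) \<Longrightarrow> test_fun \<phi>"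
  unfolding test_fun_def smooth_def by blast

lemma test_fun_supp: assumes "test_fun \<phi>" obtains R where "R \<ge> 0" "\<And>x. \<bar>x\<bar> > R \<Longrightarrow> \<phi> x = 0"
proof -
  obtain R where R: "\<And>x. \<bar>x\<bar> > R \<Longrightarrow> \<phi> x = 0" using assms unfolding test_fun_def by blast
  show ?thesis by (rule that[of "\<bar>R\<bar>"]) (use R in auto)
qed

lemma smooth_isCont: "smooth \<phi> \<Longrightarrow> isCont \<phi> x"
  using smooth_has_deriv DERIV_isCont by blast

lemma smooth_cont: "smooth \<phi> \<Longrightarrow> continuous_on S \<phi>"
  using smooth_isCont continuous_at_imp_continuous_on by blast

lemma smooth_meas: "smooth \<phi> \<Longrightarrow> \<phi> \<in> borel_measurable lborel"
  using smooth_cont[of \<phi> UNIV] borel_measurable_continuous_onI by simp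

lemma test_fun_bounded: assumes "test_fun \<phi>" obtains B where "\<And>x. \<bar>\<phi> x\<bar> \<le> B"
proof -
  obtain R where R: "\<And>x. \<bar>x\<bar> > R \<Longrightarrow> \<phi> x = 0" using assms unfolding test_fun_def by blast
  obtain B where B: "B \<ge> 0" "\<And>x. x \<in> {-R..R} \<Longrightarrow> norm (\<phi> x) \<le> B"
    using continuous_on_compact_bound[of "{-R..R}" \<phi>] smooth_cont[OF test_fun_smooth[OF assms]] by auto
  have "\<bar>\<phi> x\<bar> \<le> B" for x
  proof (cases "\<bar>x\<bar> > R")
    case True thus ?thesis using R B by simp
  next
    case False hence "x \<in> {-R..R}" by auto
    thus ?thesis using B by simp
  qed
  then show ?thesis using that by blast
qed

lemma test_fun_deriv: assumes "test_fun \<phi>" shows "test_fun (deriv \<phi>)"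
proof -
  obtain R where R: "\<And>x. \<bar>x\<bar> > R \<Longrightarrow> \<phi> x = 0" using assms unfolding test_fun_def by blast
  have "deriv \<phi> x = 0" if x: "\<bar>x\<bar> > R" for x
  proof -
    have "((\<lambda>y. 0) has_real_derivative 0) (at x)" by simp
    then have "(\<phi> has_real_derivative 0) (at x)"
      by (rule has_field_derivative_transform_within_open[of _ _ _ "{y. \<bar>y\<bar> > R}"])
         (use x R in \<open>auto intro!: open_Collect_less continuous_intros\<close>)
    then show ?thesis by (rule DERIV_imp_deriv)
  qed
  then show ?thesis using smooth_deriv[OF test_fun_smooth[OF assms]] by (intro test_funI) auto
qed

lemma locint_mult_bounded:
  fixes g \<phi> :: "real \<Rightarrow> real"
  assumes gm: "g \<in> borel_measurable lborel" and gi: "set_integrable lborel {-R..R} g"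
    and \<phi>m: "\<phi> \<in> borel_measurable lborel" and B: "\<And>x. \<bar>\<phi> x\<bar> \<le> B"
    and supp: "\<And>x. \<bar>x\<bar> > R \<Longrightarrow> \<phi> x = 0"
  shows "integrable lborel (\<lambda>x. g x * \<phi> x)"
proof (rule Bochner_Integration.integrable_bound)
  have "integrable lborel (\<lambda>x. indicator {-R..R} x *\<^sub>R g x)" using gi unfolding set_integrable_def .
  then have "integrable lborel (\<lambda>x. \<bar>indicator {-R..R} x *\<^sub>R g x\<bar>)" by (rule integrable_abs)
  then show "integrable lborel (\<lambda>x. B * \<bar>indicator {-R..R} x *\<^sub>R g x\<bar>)" by (rule integrable_mult_right)
  show "(\<lambda>x. g x * \<phi> x) \<in> borel_measurable lborel" using gm \<phi>m by measurable
  have B0: "B \<ge> 0" using B[of 0] by simp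
  show "AE x in lborel. norm (g x * \<phi> x) \<le> norm (B * \<bar>indicator {-R..R} x *\<^sub>R g x\<bar>)"
  proof (rule AE_I2)
    fix x show "norm (g x * \<phi> x) \<le> norm (B * \<bar>indicator {-R..R} x *\<^sub>R g x\<bar>)"
    proof (cases "\<bar>x\<bar> > R")
      case True then show ?thesis using supp[of x] by simp
    next
      case False then have "x \<in> {-R..R}" by auto
      then show ?thesis using B[of x] B0 by (simp add: abs_mult mult_right_mono mult.commute)
    qed
  qed
qed

lemma test_loc_mult:
  fixes g :: "real \<Rightarrow> real"
  assumes gm: "g \<in> borel_measurable lborel" and loc: "\<And>a b. set_integrable lborel {a..b} g"
    and \<phi>: "test_fun \<phi>"
  shows "integrable lborel (\<lambda>x. g x * \<phi> x)"
proof -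
  obtain R where R: "\<And>x. \<bar>x\<bar> > R \<Longrightarrow> \<phi> x = 0" using \<phi> unfolding test_fun_def by blast
  obtain B where B: "\<And>x. \<bar>\<phi> x\<bar> \<le> B" using test_fun_bounded[OF \<phi>] by blast
  show ?thesis by (rule locint_mult_bounded[OF gm loc smooth_meas[OF test_fun_smooth[OF \<phi>]] B R])
qed

lemma const_loc: "set_integrable lborel {a..b::real} (\<lambda>x. c::real)"
  using borel_integrable_atLeastAtMost'[of a b "\<lambda>x. c"] by simp

lemma test_integrable: "test_fun \<phi> \<Longrightarrow> integrable lborel \<phi>"
  using test_loc_mult[of "\<lambda>x. 1" \<phi>, OF _ const_loc] by simp



lemma AE_zero_from_tails:
  fixes g :: "real \<Rightarrow> real"
  assumes g: "integrable lborel g" and z: "\<And>x. (\<integral>y. g y * indicator {x<..} y \<partial>lborel) = 0"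
  shows "AE x in lborel. g x = 0"
proof -
  have gm[measurable]: "g \<in> borel_measurable lborel" using g by auto
  define M where "M = density lborel (\<lambda>y. ennreal (g y))"
  define N where "N = density lborel (\<lambda>y. ennreal (- g y))"
  have key: "emeasure M {x<..} = ennreal (\<integral>y. max 0 (g y) * indicator {x<..} y \<partial>lborel)
     \<and> emeasure N {x<..} = ennreal (\<integral>y. max 0 (- g y) * indicator {x<..} y \<partial>lborel)" for x
  proof -
    have ip: "integrable lborel (\<lambda>y. max 0 (g y) * indicator {x<..} y)"
      by (intro integrable_real_mult_indicator integrable_max g) auto
    have in': "integrable lborel (\<lambda>y. max 0 (- g y) * indicator {x<..} y)"
      by (intro integrable_real_mult_indicator integrable_max integrable_minus g) auto
    have "emeasure M {x<..} = (\<integral>\<^sup>+y. ennreal (g y) * indicator {x<..} y \<partial>lborel)"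
      unfolding M_def by (subst emeasure_density) auto
    also have "\<dots> = (\<integral>\<^sup>+y. ennreal (max 0 (g y) * indicator {x<..} y) \<partial>lborel)"
      by (intro nn_integral_cong) (auto simp: indicator_def max_def ennreal_neg)
    also have "\<dots> = ennreal (\<integral>y. max 0 (g y) * indicator {x<..} y \<partial>lborel)"
      by (rule nn_integral_eq_integral[OF ip]) auto
    finally have 1: "emeasure M {x<..} = ennreal (\<integral>y. max 0 (g y) * indicator {x<..} y \<partial>lborel)" .
    have "emeasure N {x<..} = (\<integral>\<^sup>+y. ennreal (- g y) * indicator {x<..} y \<partial>lborel)"
      unfolding N_def by (subst emeasure_density) auto
    also have "\<dots> = (\<integral>\<^sup>+y. ennreal (max 0 (- g y) * indicator {x<..} y) \<partial>lborel)"
      by (intro nn_integral_cong) (auto simp: indicator_def max_def ennreal_neg)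
    also have "\<dots> = ennreal (\<integral>y. max 0 (- g y) * indicator {x<..} y \<partial>lborel)"
      by (rule nn_integral_eq_integral[OF in']) auto
    finally show ?thesis using 1 by simp
  qed
  have eqint: "(\<integral>y. max 0 (g y) * indicator {x<..} y \<partial>lborel) = (\<integral>y. max 0 (- g y) * indicator {x<..} y \<partial>lborel)" for x
  proof -
    have ip: "integrable lborel (\<lambda>y. max 0 (g y) * indicator {x<..} y)"
      by (intro integrable_real_mult_indicator integrable_max g) auto
    have in': "integrable lborel (\<lambda>y. max 0 (- g y) * indicator {x<..} y)"
      by (intro integrable_real_mult_indicator integrable_max integrable_minus g) auto
    have "(\<integral>y. max 0 (g y) * indicator {x<..} y \<partial>lborel) - (\<integral>y. max 0 (- g y) * indicator {x<..} y \<partial>lborel)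
       = (\<integral>y. max 0 (g y) * indicator {x<..} y - max 0 (- g y) * indicator {x<..} y \<partial>lborel)"
      using ip in' by simp
    also have "\<dots> = (\<integral>y. g y * indicator {x<..} y \<partial>lborel)"
      by (intro Bochner_Integration.integral_cong) (auto simp: max_def)
    also have "\<dots> = 0" by (rule z)
    finally show ?thesis by simp
  qed
  have "M = N"
  proof (rule measure_eqI_lessThan)
    show "sets M = sets borel" "sets N = sets borel" unfolding M_def N_def by auto
    show "emeasure M {x<..} < \<infinity>" for x using key[of x] by simp
    show "emeasure M {x<..} = emeasure N {x<..}" for x using key[of x] eqint[of x] by simp
  qed
  then have "AE x in lborel. ennreal (g x) = ennreal (- g x)"
    unfolding M_def N_def by (intro sigma_finite_measure.density_unique[OF sigma_finite_lborel]) auto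
  then show ?thesis
  proof (rule AE_mp[OF _ AE_I2], intro impI)
    fix x assume e: "ennreal (g x) = ennreal (- g x)"
    show "g x = 0"
    proof (rule ccontr)
      assume "g x \<noteq> 0"
      then consider "g x > 0" | "g x < 0" by linarith
      then show False
      proof cases
        case 1 then show False using e ennreal_eq_0_iff[of "g x"] ennreal_eq_0_iff[of "- g x"] by auto
      next
        case 2 then show False using e ennreal_eq_0_iff[of "g x"] ennreal_eq_0_iff[of "- g x"] by auto
      qed
    qed
  qed
qed

definition psi_n :: "real \<Rightarrow> real \<Rightarrow> nat \<Rightarrow> real \<Rightarrow> real" where
  "psi_n c d n x = HH (real (Suc n) * (x - c)) * HH (real (Suc n) * (d - x))"

lemma psi_n_test: "test_fun (psi_n c d n)"
proof (rule test_funI[where R="\<bar>c\<bar> + \<bar>d\<bar>"])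
  have 1: "smooth (\<lambda>x. HH (real (Suc n) * x + (- real (Suc n) * c)))" by (rule smooth_affine[OF HH_smooth])
  have 2: "smooth (\<lambda>x. HH ((- real (Suc n)) * x + (real (Suc n) * d)))" by (rule smooth_affine[OF HH_smooth])
  have "smooth (\<lambda>x. HH (real (Suc n) * x + (- real (Suc n) * c)) * HH ((- real (Suc n)) * x + (real (Suc n) * d)))"
    by (rule smooth_mult[OF 1 2])
  moreover have "(\<lambda>x. HH (real (Suc n) * x + (- real (Suc n) * c)) * HH ((- real (Suc n)) * x + (real (Suc n) * d)))
      = psi_n c d n" by (auto simp: psi_n_def algebra_simps)
  ultimately show "smooth (psi_n c d n)" by simp
  fix x :: real assume x: "\<bar>c\<bar> + \<bar>d\<bar> < \<bar>x\<bar>"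
  then consider "x < c" | "x > d" by linarith
  then show "psi_n c d n x = 0"
  proof cases
    case 1 then have "real (Suc n) * (x - c) \<le> 0" by (simp add: mult_nonneg_nonpos)
    then show ?thesis by (simp add: psi_n_def HH_0)
  next
    case 2 then have "real (Suc n) * (d - x) \<le> 0" by (simp add: mult_nonneg_nonpos)
    then show ?thesis by (simp add: psi_n_def HH_0)
  qed
qed

lemma psi_n_lim: "(\<lambda>n. psi_n c d n x) \<longlonglongrightarrow> indicator {c<..<d} x"
proof (cases "c < x \<and> x < d")
  case True
  obtain N :: nat where N: "real N > 1/(x - c) + 1/(d - x)" using reals_Archimedean2 by blast
  have "eventually (\<lambda>n. psi_n c d n x = indicator {c<..<d} x) sequentially"
    unfolding eventually_sequentially
  proof (intro exI allI impI)
    fix n assume "n \<ge> N"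
    then have n: "real (Suc n) > 1/(x - c) + 1/(d - x)" using N by linarith
    have p1: "1/(x-c) > 0" "1/(d-x) > 0" using True by auto
    have "real (Suc n) * (x - c) \<ge> 1"
    proof -
      have "real (Suc n) \<ge> 1/(x-c)" using n p1 by linarith
      then have "real (Suc n) * (x - c) \<ge> 1/(x-c) * (x-c)" using True by (intro mult_right_mono) auto
      then show ?thesis using True by simp
    qed
    moreover have "real (Suc n) * (d - x) \<ge> 1"
    proof -
      have "real (Suc n) \<ge> 1/(d-x)" using n p1 by linarith
      then have "real (Suc n) * (d - x) \<ge> 1/(d-x) * (d-x)" using True by (intro mult_right_mono) auto
      then show ?thesis using True by simp
    qed
    ultimately show "psi_n c d n x = indicator {c<..<d} x" using True by (simp add: psi_n_def HH_1)
  qed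
  then show ?thesis by (rule tendsto_eventually)
next
  case False
  then consider "x \<le> c" | "x \<ge> d" by linarith
  then have "psi_n c d n x = 0" for n
  proof cases
    case 1 then have "real (Suc n) * (x - c) \<le> 0" by (simp add: mult_nonneg_nonpos)
    then show ?thesis by (simp add: psi_n_def HH_0)
  next
    case 2 then have "real (Suc n) * (d - x) \<le> 0" by (simp add: mult_nonneg_nonpos)
    then show ?thesis by (simp add: psi_n_def HH_0)
  qed
  then show ?thesis using False by simp
qed

lemma psi_n_bound: "\<bar>psi_n c d n x\<bar> \<le> indicator {c..d} x"
proof (cases "c \<le> x \<and> x \<le> d")
  case True
  have "\<bar>psi_n c d n x\<bar> \<le> 1" using HH_bounds[of "real (Suc n) * (x - c)"] HH_bounds[of "real (Suc n) * (d - x)"]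
    by (auto simp: psi_n_def abs_mult intro: mult_le_one)
  then show ?thesis using True by simp
next
  case False
  then consider "x < c" | "x > d" by linarith
  then have "psi_n c d n x = 0"
  proof cases
    case 1 then have "real (Suc n) * (x - c) \<le> 0" by (simp add: mult_nonneg_nonpos)
    then show ?thesis by (simp add: psi_n_def HH_0)
  next
    case 2 then have "real (Suc n) * (d - x) \<le> 0" by (simp add: mult_nonneg_nonpos)
    then show ?thesis by (simp add: psi_n_def HH_0)
  qed
  then show ?thesis by simp
qed

lemma fund_lemma:
  fixes f :: "real \<Rightarrow> real"
  assumes fm[measurable]: "f \<in> borel_measurable lborel"
    and loc: "\<And>a b. set_integrable lborel {a..b} f"
    and orth: "\<And>\<phi>. test_fun \<phi> \<Longrightarrow> (\<integral>x. f x * \<phi> x \<partial>lborel) = 0"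
  shows "AE x in lborel. f x = 0"
proof -
  have step1: "(\<integral>x. f x * indicator {c<..<d} x \<partial>lborel) = 0" for c d
  proof -
    have "(\<lambda>n. \<integral>x. f x * psi_n c d n x \<partial>lborel) \<longlonglongrightarrow> (\<integral>x. f x * indicator {c<..<d} x \<partial>lborel)"
    proof (rule integral_dominated_convergence[where w="\<lambda>x. \<bar>indicator {c..d} x *\<^sub>R f x\<bar>"])
      show "(\<lambda>x. f x * indicator {c<..<d} x) \<in> borel_measurable lborel" by measurable
      show "(\<lambda>x. f x * psi_n c d n x) \<in> borel_measurable lborel" for n
        using smooth_meas[OF test_fun_smooth[OF psi_n_test]] by measurable
      show "integrable lborel (\<lambda>x. \<bar>indicator {c..d} x *\<^sub>R f x\<bar>)"
        using loc[of c d] unfolding set_integrable_def by (rule integrable_abs)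
      show "AE x in lborel. (\<lambda>n. f x * psi_n c d n x) \<longlonglongrightarrow> f x * indicator {c<..<d} x"
        by (intro AE_I2 tendsto_mult tendsto_const psi_n_lim)
      show "AE x in lborel. norm (f x * psi_n c d n x) \<le> \<bar>indicator {c..d} x *\<^sub>R f x\<bar>" for n
        using psi_n_bound[of c d n] by (intro AE_I2) (auto simp: abs_mult mult_left_mono mult.commute)
    qed
    moreover have "(\<lambda>n. \<integral>x. f x * psi_n c d n x \<partial>lborel) = (\<lambda>n. 0)"
      using orth[OF psi_n_test] by simp
    ultimately show ?thesis using LIMSEQ_unique tendsto_const by metis
  qed
  have step2: "AE x in lborel. x \<in> {-real n<..<real n} \<longrightarrow> f x = 0" for n
  proof -
    define g where "g x = f x * indicator {-real n<..<real n} x" for x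
    have gi: "integrable lborel g"
    proof -
      have "set_integrable lborel {-real n<..<real n} f"
        by (rule set_integrable_subset[OF loc[of "-real n" "real n"]]) auto
      then show ?thesis unfolding set_integrable_def g_def by (simp add: mult.commute)
    qed
    have "(\<integral>y. g y * indicator {x<..} y \<partial>lborel) = 0" for x
    proof (cases "x < real n")
      case True
      have "(\<integral>y. g y * indicator {x<..} y \<partial>lborel) = (\<integral>y. f y * indicator {max x (-real n)<..<real n} y \<partial>lborel)"
        by (intro Bochner_Integration.integral_cong) (auto simp: g_def indicator_def)
      then show ?thesis using step1 by simp
    next
      case False
      have "(\<lambda>y. g y * indicator {x<..} y) = (\<lambda>y. 0)"
        using False by (auto simp: g_def indicator_def)
      then show ?thesis by (simp del: mult_eq_0_iff)
    qed
    then have "AE x in lborel. g x = 0" by (rule AE_zero_from_tails[OF gi])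
    then show ?thesis by (rule AE_mp) (auto simp: g_def intro!: AE_I2)
  qed
  have "AE x in lborel. \<forall>n. x \<in> {-real n<..<real n} \<longrightarrow> f x = 0"
    by (rule AE_all_countable[THEN iffD2]) (use step2 in blast)
  then show ?thesis
  proof (rule AE_mp[OF _ AE_I2], intro impI)
    fix x assume a: "\<forall>n. x \<in> {-real n<..<real n} \<longrightarrow> f x = 0"
    obtain n :: nat where "real n > \<bar>x\<bar>" using reals_Archimedean2 by blast
    then have "x \<in> {-real n<..<real n}" by auto
    then show "f x = 0" using a by blast
  qed
qed



lemma weak_deriv_unique:
  fixes w v1 v2 :: "real \<Rightarrow> real"
  assumes m1: "v1 \<in> borel_measurable lborel" and m2: "v2 \<in> borel_measurable lborel"
    and d1: "weak_deriv w v1" and d2: "weak_deriv w v2"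
  shows "AE x in lborel. v1 x = v2 x"
proof -
  have l1: "\<And>a b. set_integrable lborel {a..b} v1" and l2: "\<And>a b. set_integrable lborel {a..b} v2"
    using d1 d2 unfolding weak_deriv_def by auto
  have "AE x in lborel. v1 x - v2 x = 0"
  proof (rule fund_lemma)
    show "(\<lambda>x. v1 x - v2 x) \<in> borel_measurable lborel" using m1 m2 by measurable
    show "set_integrable lborel {a..b} (\<lambda>x. v1 x - v2 x)" for a b
      using l1 l2 by (rule set_integral_diff)
    fix \<phi> assume \<phi>: "test_fun \<phi>"
    have i1: "integrable lborel (\<lambda>x. v1 x * \<phi> x)" by (rule test_loc_mult[OF m1 l1 \<phi>])
    have i2: "integrable lborel (\<lambda>x. v2 x * \<phi> x)" by (rule test_loc_mult[OF m2 l2 \<phi>])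
    have A: "(\<integral>x. w x * deriv \<phi> x \<partial>lborel) = - (\<integral>x. v1 x * \<phi> x \<partial>lborel)"
      using d1 \<phi> unfolding weak_deriv_def by blast
    have B: "(\<integral>x. w x * deriv \<phi> x \<partial>lborel) = - (\<integral>x. v2 x * \<phi> x \<partial>lborel)"
      using d2 \<phi> unfolding weak_deriv_def by blast
    have e: "(\<integral>x. v1 x * \<phi> x \<partial>lborel) = (\<integral>x. v2 x * \<phi> x \<partial>lborel)"
      using A B by linarith
    have "(\<integral>x. (v1 x - v2 x) * \<phi> x \<partial>lborel) = (\<integral>x. v1 x * \<phi> x - v2 x * \<phi> x \<partial>lborel)"
      by (simp add: algebra_simps)
    also have "\<dots> = 0" using i1 i2 e by simp
    finally show "(\<integral>x. (v1 x - v2 x) * \<phi> x \<partial>lborel) = 0" .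
  qed
  then show ?thesis by (rule AE_mp) (auto intro!: AE_I2)
qed

lemma antideriv_test:
  fixes \<psi> :: "real \<Rightarrow> real"
  assumes \<psi>: "test_fun \<psi>" and int0: "(\<integral>x. \<psi> x \<partial>lborel) = 0"
  obtains \<Phi> where "test_fun \<Phi>" "\<And>x. deriv \<Phi> x = \<psi> x"
proof -
  obtain R where R0: "R \<ge> 0" and R: "\<And>x. \<bar>x\<bar> > R \<Longrightarrow> \<psi> x = 0" using test_fun_supp[OF \<psi>] by blast
  have sm: "smooth \<psi>" by (rule test_fun_smooth[OF \<psi>])
  have cont: "continuous_on S \<psi>" for S by (rule smooth_cont[OF sm])
  define a where "a = - R - 1"
  define \<Phi> where "\<Phi> x = integral {a..x} \<psi>" for x
  have zero_left: "\<psi> x = 0" if "x < a + 1" for x using that R[of x] R0 unfolding a_def by auto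
  have \<Phi>_left: "\<Phi> y = 0" if "y < a + 1" for y
  proof (cases "y < a")
    case True then show ?thesis by (simp add: \<Phi>_def)
  next
    case False
    have "integral {a..y} \<psi> = integral {a..y} (\<lambda>x. 0)"
      by (rule integral_cong) (use that zero_left in auto)
    then show ?thesis by (simp add: \<Phi>_def)
  qed
  have der: "(\<Phi> has_real_derivative \<psi> x) (at x)" for x
  proof (cases "x > a")
    case True
    have "(\<Phi> has_real_derivative \<psi> x) (at x within {a..x+1})"
      unfolding \<Phi>_def by (rule integral_has_real_derivative[OF cont]) (use True in auto)
    moreover have "at x within {a..x+1} = at x"
      by (rule at_within_interior) (use True in auto)
    ultimately show ?thesis by simp
  next
    case False
    have "((\<lambda>y. 0) has_real_derivative \<psi> x) (at x)" using zero_left[of x] False by simp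
    then show ?thesis
      by (rule has_field_derivative_transform_within_open[of _ _ _ "{..<a+1}"])
         (use False \<Phi>_left in auto)
  qed
  have \<Phi>_right: "\<Phi> x = 0" if "x > R + 1" for x
  proof -
    have si: "set_integrable lborel {a..x} \<psi>" by (rule borel_integrable_atLeastAtMost'[OF cont])
    have "\<Phi> x = (LINT y:{a..x}|lborel. \<psi> y)" unfolding \<Phi>_def using set_borel_integral_eq_integral(2)[OF si] by simp
    also have "\<dots> = (\<integral>y. \<psi> y \<partial>lborel)" unfolding set_lebesgue_integral_def
    proof (intro Bochner_Integration.integral_cong refl)
      fix y show "indicator {a..x} y *\<^sub>R \<psi> y = \<psi> y"
      proof (cases "\<psi> y = 0")
        case False hence "\<bar>y\<bar> \<le> R" using R[of y] by force
        hence "y \<in> {a..x}" using that unfolding a_def by auto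
        thus ?thesis by simp
      qed simp
    qed
    finally show ?thesis using int0 by simp
  qed
  show ?thesis
  proof (rule that)
    show "test_fun \<Phi>"
    proof (rule test_funI[where R="R+1"])
      show "smooth \<Phi>" by (rule smooth_I[OF der sm])
      fix x :: real assume "\<bar>x\<bar> > R + 1"
      then consider "x > R + 1" | "x < a + 1" unfolding a_def by linarith
      then show "\<Phi> x = 0" using \<Phi>_left \<Phi>_right by cases auto
    qed
    show "deriv \<Phi> x = \<psi> x" for x using der DERIV_imp_deriv by blast
  qed
qed

definition psi1 :: "real \<Rightarrow> real" where "psi1 x = HH x * HH (3 - x)"

lemma psi1_test: "test_fun psi1"
proof (rule test_funI[where R=3])
  have "smooth (\<lambda>x. HH (1 * x + 0) * HH ((-1) * x + 3))"
    by (rule smooth_mult[OF smooth_affine[OF HH_smooth] smooth_affine[OF HH_smooth]])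
  then show "smooth psi1" unfolding psi1_def[abs_def] by simp
  fix x :: real assume "\<bar>x\<bar> > 3"
  then consider "x < 0" | "x > 3" by linarith
  then show "psi1 x = 0" by cases (auto simp: psi1_def HH_0)
qed

lemma psi1_int: "(\<integral>x. psi1 x \<partial>lborel) \<ge> 1"
proof -
  have "(\<integral>x. indicator {1..2::real} x \<partial>lborel) \<le> (\<integral>x. psi1 x \<partial>lborel)"
  proof (rule integral_mono)
    show "integrable lborel (indicator {1..2::real} :: real \<Rightarrow> real)" by simp
    show "integrable lborel psi1" by (rule test_integrable[OF psi1_test])
    fix x :: real
    show "indicator {1..2} x \<le> psi1 x"
    proof (cases "x \<in> {1..2}")
      case True then show ?thesis by (simp add: psi1_def HH_1)
    next
      case False then show ?thesis using HH_bounds[of x] HH_bounds[of "3-x"] by (simp add: psi1_def)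
    qed
  qed
  then show ?thesis by simp
qed

lemma du_bois_reymond:
  fixes g :: "real \<Rightarrow> real"
  assumes gm[measurable]: "g \<in> borel_measurable lborel" and loc: "\<And>a b. set_integrable lborel {a..b} g"
   and orth: "\<And>\<phi>. test_fun \<phi> \<Longrightarrow> (\<integral>x. g x * deriv \<phi> x \<partial>lborel) = 0"
  shows "\<exists>C. AE x in lborel. g x = C"
proof -
  define I1 where "I1 = (\<integral>x. psi1 x \<partial>lborel)"
  have I1: "I1 \<ge> 1" using psi1_int unfolding I1_def .
  define c0 where "c0 = 1 / I1"
  define psi0 where "psi0 x = c0 * psi1 x" for x
  have psi0_test: "test_fun psi0"
  proof -
    obtain R where R: "\<And>x. \<bar>x\<bar> > R \<Longrightarrow> psi1 x = 0" using test_fun_supp[OF psi1_test] by blast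
    show ?thesis unfolding psi0_def
      by (rule test_funI[where R=R]) (use R smooth_cmult[OF test_fun_smooth[OF psi1_test]] in auto)
  qed
  have psi0_int: "(\<integral>x. psi0 x \<partial>lborel) = 1" using I1 unfolding psi0_def c0_def by (simp add: I1_def)
  define C where "C = (\<integral>x. g x * psi0 x \<partial>lborel)"
  have "AE x in lborel. g x - C = 0"
  proof (rule fund_lemma)
    show "(\<lambda>x. g x - C) \<in> borel_measurable lborel" by measurable
    show "set_integrable lborel {a..b} (\<lambda>x. g x - C)" for a b
      using loc const_loc by (rule set_integral_diff)
    fix \<psi> assume \<psi>: "test_fun \<psi>"
    define k where "k = (\<integral>x. \<psi> x \<partial>lborel)"
    define chi_f where "chi_f x = \<psi> x - k * psi0 x" for x
    have chi_f_test: "test_fun chi_f"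
    proof -
      obtain R1 where R1: "\<And>x. \<bar>x\<bar> > R1 \<Longrightarrow> \<psi> x = 0" "R1 \<ge> 0" using test_fun_supp[OF \<psi>] by blast
      obtain R2 where R2: "\<And>x. \<bar>x\<bar> > R2 \<Longrightarrow> psi0 x = 0" "R2 \<ge> 0" using test_fun_supp[OF psi0_test] by blast
      have "smooth (\<lambda>x. \<psi> x + (-k) * psi0 x)"
        by (rule smooth_add[OF test_fun_smooth[OF \<psi>] smooth_cmult[OF test_fun_smooth[OF psi0_test]]])
      then have "smooth chi_f" unfolding chi_f_def[abs_def] by simp
      then show ?thesis
        by (rule test_funI[where R="R1+R2"]) (use R1 R2 in \<open>auto simp: chi_f_def\<close>)
    qed
    have ip: "integrable lborel \<psi>" by (rule test_integrable[OF \<psi>])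
    have ip0: "integrable lborel psi0" by (rule test_integrable[OF psi0_test])
    have "(\<integral>x. chi_f x \<partial>lborel) = (\<integral>x. \<psi> x \<partial>lborel) - (\<integral>x. k * psi0 x \<partial>lborel)"
      unfolding chi_f_def by (rule Bochner_Integration.integral_diff[OF ip integrable_mult_right[OF ip0]])
    also have "\<dots> = k - k * 1" using psi0_int k_def by simp
    finally have "(\<integral>x. chi_f x \<partial>lborel) = 0" by simp
    then obtain \<Phi> where \<Phi>: "test_fun \<Phi>" "\<And>x. deriv \<Phi> x = chi_f x"
      using antideriv_test[OF chi_f_test] by blast
    have "(\<integral>x. g x * chi_f x \<partial>lborel) = 0" using orth[OF \<Phi>(1)] \<Phi>(2) by simp
    moreover have gi: "integrable lborel (\<lambda>x. g x * \<psi> x)" by (rule test_loc_mult[OF gm loc \<psi>])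
    moreover have gi0: "integrable lborel (\<lambda>x. g x * psi0 x)" by (rule test_loc_mult[OF gm loc psi0_test])
    moreover have "(\<integral>x. g x * chi_f x \<partial>lborel) = (\<integral>x. g x * \<psi> x - k * (g x * psi0 x) \<partial>lborel)"
      unfolding chi_f_def by (simp add: algebra_simps)
    moreover have "(\<integral>x. g x * \<psi> x - k * (g x * psi0 x) \<partial>lborel) = (\<integral>x. g x * \<psi> x \<partial>lborel) - (\<integral>x. k * (g x * psi0 x) \<partial>lborel)"
      by (rule Bochner_Integration.integral_diff[OF gi integrable_mult_right[OF gi0]])
    moreover have "(\<integral>x. k * (g x * psi0 x) \<partial>lborel) = k * C" unfolding C_def by (rule integral_mult_right_zero)
    ultimately have e1: "(\<integral>x. g x * \<psi> x \<partial>lborel) = k * C" by linarith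
    have "(\<integral>x. (g x - C) * \<psi> x \<partial>lborel) = (\<integral>x. g x * \<psi> x - C * \<psi> x \<partial>lborel)"
      by (simp add: algebra_simps)
    also have "\<dots> = (\<integral>x. g x * \<psi> x \<partial>lborel) - (\<integral>x. C * \<psi> x \<partial>lborel)"
      by (rule Bochner_Integration.integral_diff[OF gi integrable_mult_right[OF ip]])
    also have "\<dots> = k * C - C * k" using e1 k_def by simp
    finally show "(\<integral>x. (g x - C) * \<psi> x \<partial>lborel) = 0" by simp
  qed
  then show ?thesis by (intro exI[of _ C]) (rule AE_mp, auto intro!: AE_I2)
qed



definition ACrep :: "(real \<Rightarrow> real) \<Rightarrow> (real \<Rightarrow> real) \<Rightarrow> bool" where
 "ACrep F f \<longleftrightarrow> (\<forall>a b. set_integrable lborel {a..b} f)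
     \<and> (\<forall>x y. x \<le> y \<longrightarrow> F y - F x = (LINT t:{x..y}|lborel. f t))"

lemma ACrep_int: "ACrep F f \<Longrightarrow> set_integrable lborel {a..b} f"
  unfolding ACrep_def by blast

lemma ACrep_eq: "ACrep F f \<Longrightarrow> x \<le> y \<Longrightarrow> F y - F x = (LINT t:{x..y}|lborel. f t)"
  unfolding ACrep_def by blast

lemma set_integrable_empty_Icc: "b < a \<Longrightarrow> set_integrable lborel {a..b::real} f"
  by (simp add: set_integrable_def)

lemma AC_mult_core:
  fixes A B a b :: "real \<Rightarrow> real"
  assumes AA: "ACrep A a" and BB: "ACrep B b" and xy: "x \<le> y"
  shows "set_integrable lborel {x..y} (\<lambda>t. a t * B t + A t * b t)
    \<and> (LINT t:{x..y}|lborel. a t * B t + A t * b t) = A y * B y - A x * B x"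
proof -
  define S where "S = {x..y}"
  define F where "F s = indicator S s * a s" for s
  define G where "G t = indicator S t * b t" for t
  have Fi: "integrable lborel F" using ACrep_int[OF AA, of x y] unfolding set_integrable_def F_def S_def by simp
  have Gi: "integrable lborel G" using ACrep_int[OF BB, of x y] unfolding set_integrable_def G_def S_def by simp
  have Fm[measurable]: "F \<in> borel_measurable lborel" using Fi by auto
  have Gm[measurable]: "G \<in> borel_measurable lborel" using Gi by auto
  define k where "k s t = (if t \<le> s then F s * G t else 0)" for s t
  have k0i: "integrable (lborel \<Otimes>\<^sub>M lborel) (\<lambda>(s,t). F s * G t)"
  proof (rule lborel_pair.Fubini_integrable)
    show "(\<lambda>(s,t). F s * G t) \<in> borel_measurable (lborel \<Otimes>\<^sub>M lborel)" by measurable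
    have "(\<lambda>s. \<integral>t. norm (case (s, t) of (s, t) \<Rightarrow> F s * G t) \<partial>lborel) = (\<lambda>s. \<bar>F s\<bar> * (\<integral>t. \<bar>G t\<bar> \<partial>lborel))"
      by (simp add: abs_mult)
    then show "integrable lborel (\<lambda>s. \<integral>t. norm (case (s, t) of (s, t) \<Rightarrow> F s * G t) \<partial>lborel)"
      using Fi by (simp add: integrable_abs)
    show "AE s in lborel. integrable lborel (\<lambda>t. case (s, t) of (s, t) \<Rightarrow> F s * G t)"
      using Gi by simp
  qed
  have ki: "integrable (lborel \<Otimes>\<^sub>M lborel) (case_prod k)"
  proof (rule Bochner_Integration.integrable_bound[OF k0i])
    show "case_prod k \<in> borel_measurable (lborel \<Otimes>\<^sub>M lborel)" unfolding k_def by measurable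
    show "AE p in lborel \<Otimes>\<^sub>M lborel. norm (case_prod k p) \<le> norm (case p of (s, t) \<Rightarrow> F s * G t)"
      by (intro AE_I2) (auto simp: k_def)
  qed
  have in1: "(\<integral>t. k s t \<partial>lborel) = indicator S s * (a s * (B s - B x))" for s
  proof (cases "s \<in> S")
    case True
    have "(\<integral>t. k s t \<partial>lborel) = (\<integral>t. F s * (indicator {x..s} t *\<^sub>R b t) \<partial>lborel)"
      using True by (intro Bochner_Integration.integral_cong) (auto simp: k_def G_def S_def indicator_def)
    also have "\<dots> = F s * (LINT t:{x..s}|lborel. b t)" unfolding set_lebesgue_integral_def by simp
    also have "\<dots> = F s * (B s - B x)" using ACrep_eq[OF BB, of x s] True by (simp add: S_def)
    finally show ?thesis using True by (simp add: F_def)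
  next
    case False then have "F s = 0" by (simp add: F_def)
    then have "(\<lambda>t. k s t) = (\<lambda>t. 0)" by (auto simp: k_def)
    then show ?thesis using False by (simp del: mult_eq_0_iff)
  qed
  have in2: "(\<integral>s. k s t \<partial>lborel) = indicator S t * (b t * (A y - A t))" for t
  proof (cases "t \<in> S")
    case True
    have "(\<integral>s. k s t \<partial>lborel) = (\<integral>s. G t * (indicator {t..y} s *\<^sub>R a s) \<partial>lborel)"
      using True by (intro Bochner_Integration.integral_cong) (auto simp: k_def F_def S_def indicator_def)
    also have "\<dots> = G t * (LINT s:{t..y}|lborel. a s)" unfolding set_lebesgue_integral_def by simp
    also have "\<dots> = G t * (A y - A t)" using ACrep_eq[OF AA, of t y] True by (simp add: S_def)
    finally show ?thesis using True by (simp add: G_def)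
  next
    case False then have "G t = 0" by (simp add: G_def)
    then have "(\<lambda>s. k s t) = (\<lambda>s. 0)" by (auto simp: k_def)
    then show ?thesis using False by (simp del: mult_eq_0_iff)
  qed
  define P1 where "P1 s = indicator S s * (a s * (B s - B x))" for s
  define P2 where "P2 t = indicator S t * (b t * (A y - A t))" for t
  have P1i: "integrable lborel P1"
    using lborel_pair.integrable_fst[OF ki] in1 unfolding P1_def by simp
  have P2i: "integrable lborel P2"
    using lborel_pair.integrable_snd[OF ki] in2 unfolding P2_def by simp
  have P12: "(\<integral>s. P1 s \<partial>lborel) = (\<integral>t. P2 t \<partial>lborel)"
    using lborel_pair.Fubini_integral[OF ki] in1 in2 unfolding P1_def P2_def by simp
  have pw: "indicator S t *\<^sub>R (a t * B t + A t * b t) = P1 t + B x * F t + A y * G t - P2 t" for t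
    by (simp add: P1_def P2_def F_def G_def algebra_simps)
  have Ti: "integrable lborel (\<lambda>t. P1 t + B x * F t + A y * G t - P2 t)"
    using P1i P2i Fi Gi by auto
  have "(\<integral>t. P1 t + B x * F t + A y * G t - P2 t \<partial>lborel)
      = (\<integral>t. P1 t \<partial>lborel) + B x * (\<integral>t. F t \<partial>lborel) + A y * (\<integral>t. G t \<partial>lborel) - (\<integral>t. P2 t \<partial>lborel)"
    using P1i P2i Fi Gi by simp
  also have "(\<integral>t. F t \<partial>lborel) = A y - A x"
    using ACrep_eq[OF AA xy] unfolding F_def S_def set_lebesgue_integral_def by simp
  also have "(\<integral>t. G t \<partial>lborel) = B y - B x"
    using ACrep_eq[OF BB xy] unfolding G_def S_def set_lebesgue_integral_def by simp
  finally have I: "(\<integral>t. P1 t + B x * F t + A y * G t - P2 t \<partial>lborel) = A y * B y - A x * B x"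
    using P12 by (simp add: algebra_simps)
  show ?thesis unfolding set_integrable_def set_lebesgue_integral_def
    using Ti I unfolding pw[symmetric] S_def by simp
qed

lemma AC_mult:
  assumes AA: "ACrep A a" and BB: "ACrep B b"
  shows "ACrep (\<lambda>t. A t * B t) (\<lambda>t. a t * B t + A t * b t)"
  unfolding ACrep_def
proof (intro conjI allI impI)
  fix p q :: real
  show "set_integrable lborel {p..q} (\<lambda>t. a t * B t + A t * b t)"
  proof (cases "p \<le> q")
    case True then show ?thesis using AC_mult_core[OF AA BB True] by blast
  qed (simp add: set_integrable_empty_Icc)
next
  fix x y :: real assume "x \<le> y"
  then show "A y * B y - A x * B x = (LINT t:{x..y}|lborel. a t * B t + A t * b t)"
    using AC_mult_core[OF AA BB] by simp
qed



lemma set_combine: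
  fixes f :: "real \<Rightarrow> real"
  assumes "a \<le> c" "c \<le> b" and fi: "set_integrable lborel {a..b} f"
  shows "(LINT x:{a..b}|lborel. f x) = (LINT x:{a..c}|lborel. f x) + (LINT x:{c..b}|lborel. f x)"
proof -
  have "{a..b} = {a..c} \<union> {c..b}" using assms by auto
  moreover have "(LINT x:{a..c} \<union> {c..b}|lborel. f x) = (LINT x:{a..c}|lborel. f x) + (LINT x:{c..b}|lborel. f x)"
  proof (rule set_integral_Un_AE)
    show "AE x in lborel. \<not> (x \<in> {a..c} \<and> x \<in> {c..b})"
      using AE_lborel_singleton[of c] by eventually_elim auto
    show "set_integrable lborel {a..c} f" by (rule set_integrable_subset[OF fi]) (use assms in auto)
    show "set_integrable lborel {c..b} f" by (rule set_integrable_subset[OF fi]) (use assms in auto)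
  qed auto
  ultimately show ?thesis by simp
qed

lemma AC_cont_on: assumes AA: "ACrep F f" shows "continuous_on {a..b} F"
proof (cases "a \<le> b")
  case True
  have fi: "f integrable_on {a..b}" using set_borel_integral_eq_integral(1)[OF ACrep_int[OF AA]] .
  have "continuous_on {a..b} (\<lambda>x. F a + integral {a..x} f)"
    by (intro continuous_intros indefinite_integral_continuous_1 fi)
  moreover have "F a + integral {a..x} f = F x" if "x \<in> {a..b}" for x
  proof -
    have "F x - F a = (LINT t:{a..x}|lborel. f t)" using ACrep_eq[OF AA] that by auto
    also have "\<dots> = integral {a..x} f" by (rule set_borel_integral_eq_integral(2)[OF ACrep_int[OF AA]])
    finally show ?thesis by simp
  qed
  ultimately show ?thesis by (rule continuous_on_eq)
qed simp

lemma AC_isCont: assumes AA: "ACrep F f" shows "isCont F x"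
  using AC_cont_on[OF AA, of "x-1" "x+1"] by (rule continuous_on_interior) auto

lemma AC_cont: "ACrep F f \<Longrightarrow> continuous_on S F"
  using AC_isCont continuous_at_imp_continuous_on by blast

lemma AC_meas: "ACrep F f \<Longrightarrow> F \<in> borel_measurable lborel"
  using AC_cont[of F f UNIV] borel_measurable_continuous_onI by simp

lemma cont_loc: "continuous_on UNIV g \<Longrightarrow> set_integrable lborel {a..b} (g::real\<Rightarrow>real)"
  by (rule borel_integrable_atLeastAtMost') (auto intro: continuous_on_subset)

lemma AC_add:
  assumes "ACrep F f" "ACrep G g"
  shows "ACrep (\<lambda>x. F x + G x) (\<lambda>x. f x + g x)"
  unfolding ACrep_def
proof (intro conjI allI impI)
  fix a b :: real show "set_integrable lborel {a..b} (\<lambda>x. f x + g x)"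
    using ACrep_int[OF assms(1)] ACrep_int[OF assms(2)] by (rule set_integral_add(1))
next
  fix x y :: real assume xy: "x \<le> y"
  show "F y + G y - (F x + G x) = (LINT t:{x..y}|lborel. f t + g t)"
    using ACrep_eq[OF assms(1) xy] ACrep_eq[OF assms(2) xy]
      set_integral_add(2)[OF ACrep_int[OF assms(1)] ACrep_int[OF assms(2)], of x y] by simp
qed

lemma AC_cmult:
  assumes "ACrep F f"
  shows "ACrep (\<lambda>x. c * F x) (\<lambda>x. c * f x)"
  using assms unfolding ACrep_def
  by (auto simp: set_integral_mult_right set_integrable_mult_right right_diff_distrib[symmetric])

lemma AC_C1:
  assumes d: "\<And>x. (h has_real_derivative h' x) (at x)" and c: "continuous_on UNIV h'"
  shows "ACrep h h'"
  unfolding ACrep_def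
proof (intro conjI allI impI)
  fix a b :: real show "set_integrable lborel {a..b} h'" by (rule cont_loc[OF c])
next
  fix x y :: real assume "x \<le> y"
  have "integral\<^sup>L lborel (\<lambda>t. indicator {x .. y} t *\<^sub>R h' t) = h y - h x"
  proof (rule integral_FTC_atLeastAtMost[OF \<open>x \<le> y\<close>])
    show "(h has_vector_derivative h' t) (at t within {x..y})" for t
      using d[of t] by (auto simp: has_real_derivative_iff_has_vector_derivative intro: has_vector_derivative_at_within)
    show "continuous_on {x..y} h'" using c by (rule continuous_on_subset) auto
  qed
  then show "h y - h x = (LINT t:{x..y}|lborel. h' t)" unfolding set_lebesgue_integral_def by simp
qed

lemma AC_const: "ACrep (\<lambda>x. c) (\<lambda>x. 0)"
  by (rule AC_C1) auto

lemma AC_congAE: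
  assumes AA: "ACrep F f" and fm: "f \<in> borel_measurable lborel" and gm: "g \<in> borel_measurable lborel"
    and ae: "AE x in lborel. f x = g x"
  shows "ACrep F g"
  unfolding ACrep_def
proof (intro conjI allI impI)
  fix a b :: real
  have "set_integrable lborel {a..b} f = set_integrable lborel {a..b} g"
    by (rule set_integrable_cong_AE[OF fm gm]) (use ae in auto)
  then show "set_integrable lborel {a..b} g" using ACrep_int[OF AA] by simp
next
  fix x y :: real assume "x \<le> y"
  have "(LINT t:{x..y}|lborel. f t) = (LINT t:{x..y}|lborel. g t)"
    by (rule set_lebesgue_integral_cong_AE[OF _ fm gm]) (use ae in auto)
  then show "F y - F x = (LINT t:{x..y}|lborel. g t)" using ACrep_eq[OF AA \<open>x \<le> y\<close>] by simp
qed

lemma int_indicator_const: "a \<le> b \<Longrightarrow> (\<integral>x. indicator {a..b} x *\<^sub>R (c::real) \<partial>lborel) = (b - a) * c"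
  by (simp add: integral_scaleR_left)

lemma tail_lim:
  fixes F :: "real \<Rightarrow> real"
  assumes Fi: "integrable lborel F" and lim: "(F \<longlongrightarrow> L) at_top"
  shows "L = 0"
proof (rule ccontr)
  assume L: "L \<noteq> 0"
  define c where "c = \<bar>L\<bar> / 2"
  have c: "c > 0" using L by (simp add: c_def)
  have "eventually (\<lambda>x. dist (F x) L < c) at_top" using lim c by (rule tendstoD)
  then obtain R0 where R0: "\<And>x. x \<ge> R0 \<Longrightarrow> dist (F x) L < c" by (auto simp: eventually_at_top_linorder)
  have big: "\<bar>F x\<bar> \<ge> c" if "x \<ge> R0" for x
  proof -
    have "dist (F x) L < c" using R0[OF that] .
    then have "\<bar>F x - L\<bar> < \<bar>L\<bar>/2" by (simp add: dist_real_def c_def)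
    then show ?thesis unfolding c_def by arith
  qed
  define T where "T = (\<integral>x. \<bar>F x\<bar> \<partial>lborel)"
  obtain n :: nat where n: "real n > T / c" using reals_Archimedean2 by blast
  have "(\<integral>x. indicator {R0..R0 + real n} x *\<^sub>R c \<partial>lborel) \<le> T"
    unfolding T_def
  proof (rule integral_mono)
    show "integrable lborel (\<lambda>x. indicator {R0..R0 + real n} x *\<^sub>R c)"
      using const_loc[of R0 "R0 + real n" c] unfolding set_integrable_def .
    show "integrable lborel (\<lambda>x. \<bar>F x\<bar>)" using Fi by (rule integrable_abs)
    fix x show "indicator {R0..R0 + real n} x *\<^sub>R c \<le> \<bar>F x\<bar>"
      using big[of x] by (cases "x \<in> {R0..R0 + real n}") auto
  qed
  then have "real n * c \<le> T" using int_indicator_const[of R0 "R0 + real n" c] by simp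
  moreover have "T < real n * c" using n c by (simp add: field_simps)
  ultimately show False by simp
qed

lemma dom_conv_interval:
  fixes f :: "real \<Rightarrow> real" and S :: "real \<Rightarrow> real set"
  assumes fi: "integrable lborel f"
    and lim: "\<And>t. eventually (\<lambda>R. (indicator (S R) t :: real) = indicator S' t) at_top"
    and Sm: "\<And>R. S R \<in> sets lborel" and S'm: "S' \<in> sets lborel"
  shows "((\<lambda>R. \<integral>t. indicator (S R) t *\<^sub>R f t \<partial>lborel) \<longlongrightarrow> (\<integral>t. indicator S' t *\<^sub>R f t \<partial>lborel)) at_top"
proof (rule integral_dominated_convergence_at_top[where w="\<lambda>t. \<bar>f t\<bar>" and M=lborel
     and s="\<lambda>R t. indicator (S R) t *\<^sub>R f t" and f="\<lambda>t. indicator S' t *\<^sub>R f t"])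
  have fm[measurable]: "f \<in> borel_measurable lborel" using fi by auto
  show "(\<lambda>t. indicator S' t *\<^sub>R f t) \<in> borel_measurable lborel" using S'm by measurable
  show "(\<lambda>t. indicator (S R) t *\<^sub>R f t) \<in> borel_measurable lborel" for R using Sm[of R] by measurable
  show "integrable lborel (\<lambda>t. \<bar>f t\<bar>)" using fi by (rule integrable_abs)
  show "AE t in lborel. ((\<lambda>R. indicator (S R) t *\<^sub>R f t) \<longlongrightarrow> indicator S' t *\<^sub>R f t) at_top"
  proof (rule AE_I2)
    fix t show "((\<lambda>R. indicator (S R) t *\<^sub>R f t) \<longlongrightarrow> indicator S' t *\<^sub>R f t) at_top"
    proof (rule tendsto_eventually)
      show "eventually (\<lambda>R. indicator (S R) t *\<^sub>R f t = indicator S' t *\<^sub>R f t) at_top"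
        using lim[of t] by eventually_elim simp
    qed
  qed
  show "\<forall>\<^sub>F R in at_top. AE t in lborel. norm (indicator (S R) t *\<^sub>R f t) \<le> \<bar>f t\<bar>"
    by (intro always_eventually allI AE_I2) (auto simp: indicator_def)
qed

lemma AC_integral_zero:
  assumes AA: "ACrep F f" and fi: "integrable lborel f" and Fi: "integrable lborel F"
  shows "(\<integral>x. f x \<partial>lborel) = 0"
proof -
  have r: "((\<lambda>R. \<integral>t. indicator {0..R} t *\<^sub>R f t \<partial>lborel) \<longlongrightarrow> (\<integral>t. indicator {0..} t *\<^sub>R f t \<partial>lborel)) at_top"
    by (rule dom_conv_interval[OF fi]) (auto simp: eventually_at_top_linorder indicator_def intro: exI[of _ t for t])
  have "eventually (\<lambda>R. F 0 + (\<integral>t. indicator {0..R} t *\<^sub>R f t \<partial>lborel) = F R) at_top"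
  proof (rule eventually_mono[OF eventually_ge_at_top[of 0]])
    fix R :: real assume "0 \<le> R"
    then have "F R - F 0 = (LINT t:{0..R}|lborel. f t)" by (rule ACrep_eq[OF AA])
    then show "F 0 + (\<integral>t. indicator {0..R} t *\<^sub>R f t \<partial>lborel) = F R"
      unfolding set_lebesgue_integral_def by simp
  qed
  then have "(F \<longlongrightarrow> F 0 + (\<integral>t. indicator {0..} t *\<^sub>R f t \<partial>lborel)) at_top"
    by (rule tendsto_cong[THEN iffD1]) (intro tendsto_intros r)
  then have F1: "(F \<longlongrightarrow> 0) at_top" using tail_lim[OF Fi] by metis
  have l: "((\<lambda>R. \<integral>t. indicator {-R..0} t *\<^sub>R f t \<partial>lborel) \<longlongrightarrow> (\<integral>t. indicator {..0} t *\<^sub>R f t \<partial>lborel)) at_top"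
  proof (rule dom_conv_interval[OF fi])
    fix t :: real
    show "eventually (\<lambda>R. indicator {-R..0} t = (indicator {..0} t :: real)) at_top"
      using eventually_ge_at_top[of "-t"] by eventually_elim (auto simp: indicator_def)
  qed auto
  have "eventually (\<lambda>R. F 0 - (\<integral>t. indicator {-R..0} t *\<^sub>R f t \<partial>lborel) = F (-R)) at_top"
  proof (rule eventually_mono[OF eventually_ge_at_top[of 0]])
    fix R :: real assume "0 \<le> R"
    then have "F 0 - F (-R) = (LINT t:{-R..0}|lborel. f t)" by (intro ACrep_eq[OF AA]) simp
    then show "F 0 - (\<integral>t. indicator {-R..0} t *\<^sub>R f t \<partial>lborel) = F (-R)"
      unfolding set_lebesgue_integral_def by simp
  qed
  then have "((\<lambda>R. F (-R)) \<longlongrightarrow> F 0 - (\<integral>t. indicator {..0} t *\<^sub>R f t \<partial>lborel)) at_top"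
    by (rule tendsto_cong[THEN iffD1]) (intro tendsto_intros l)
  moreover have "integrable lborel (\<lambda>x. F (-x))"
    using lborel_integrable_real_affine[OF Fi, of "-1" 0] by simp
  ultimately have F2: "((\<lambda>R. F (-R)) \<longlongrightarrow> 0) at_top" using tail_lim by metis
  have w: "((\<lambda>R. \<integral>t. indicator {-R..R} t *\<^sub>R f t \<partial>lborel) \<longlongrightarrow> (\<integral>t. indicator UNIV t *\<^sub>R f t \<partial>lborel)) at_top"
  proof (rule dom_conv_interval[OF fi])
    fix t :: real
    show "eventually (\<lambda>R. indicator {-R..R} t = (indicator UNIV t :: real)) at_top"
      using eventually_ge_at_top[of "\<bar>t\<bar>"] by eventually_elim (auto simp: indicator_def)
  qed auto
  have "eventually (\<lambda>R. F R - F (-R) = (\<integral>t. indicator {-R..R} t *\<^sub>R f t \<partial>lborel)) at_top"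
  proof (rule eventually_mono[OF eventually_ge_at_top[of 0]])
    fix R :: real assume "0 \<le> R"
    then have "F R - F (-R) = (LINT t:{-R..R}|lborel. f t)" by (intro ACrep_eq[OF AA]) simp
    then show "F R - F (-R) = (\<integral>t. indicator {-R..R} t *\<^sub>R f t \<partial>lborel)"
      unfolding set_lebesgue_integral_def by simp
  qed
  moreover have "((\<lambda>R. \<integral>t. indicator {-R..R} t *\<^sub>R f t \<partial>lborel) \<longlongrightarrow> (\<integral>t. f t \<partial>lborel)) at_top"
    using w by simp
  ultimately have "((\<lambda>R. F R - F (-R)) \<longlongrightarrow> (\<integral>t. f t \<partial>lborel)) at_top"
    by (rule tendsto_cong[THEN iffD2])
  moreover have "((\<lambda>R. F R - F (-R)) \<longlongrightarrow> 0 - 0) at_top" by (intro tendsto_intros F1 F2)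
  ultimately have "(\<integral>t. f t \<partial>lborel) = 0 - 0" by (rule tendsto_unique[rotated]) simp
  then show ?thesis by simp
qed



lemma weak_rep:
  fixes u v :: "real \<Rightarrow> real"
  assumes um[measurable]: "u \<in> borel_measurable lborel" and vm[measurable]: "v \<in> borel_measurable lborel"
    and wd: "weak_deriv u v"
  shows "\<exists>U. ACrep U v \<and> (AE x in lborel. u x = U x)"
proof -
  have vloc: "\<And>a b. set_integrable lborel {a..b} v" and uloc: "\<And>a b. set_integrable lborel {a..b} u"
    using wd unfolding weak_deriv_def by auto
  define U0 where "U0 x = (if 0 \<le> x then (LINT t:{0..x}|lborel. v t) else - (LINT t:{x..0}|lborel. v t))" for x
  have AC0: "ACrep U0 v"
    unfolding ACrep_def
  proof (intro conjI allI impI vloc)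
    fix x y :: real assume xy: "x \<le> y"
    consider "0 \<le> x" | "y < 0" | "x < 0" "0 \<le> y" by linarith
    then show "U0 y - U0 x = (LINT t:{x..y}|lborel. v t)"
    proof cases
      case 1 then show ?thesis using set_combine[of 0 x y v, OF _ xy vloc] xy by (simp add: U0_def)
    next
      case 2 then show ?thesis using set_combine[of x y 0 v, OF xy _ vloc] xy by (simp add: U0_def)
    next
      case 3 then show ?thesis using set_combine[of x 0 y v, OF _ _ vloc] by (simp add: U0_def)
    qed
  qed
  have U0m[measurable]: "U0 \<in> borel_measurable lborel" by (rule AC_meas[OF AC0])
  have U0loc: "set_integrable lborel {a..b} U0" for a b by (rule cont_loc[OF AC_cont[OF AC0]])
  have key: "(\<integral>x. (u x - U0 x) * deriv \<phi> x \<partial>lborel) = 0" if \<phi>: "test_fun \<phi>" for \<phi>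
  proof -
    have sm: "smooth \<phi>" by (rule test_fun_smooth[OF \<phi>])
    have d\<phi>: "test_fun (deriv \<phi>)" by (rule test_fun_deriv[OF \<phi>])
    obtain R1 where R1: "R1 \<ge> 0" "\<And>x. \<bar>x\<bar> > R1 \<Longrightarrow> \<phi> x = 0" using test_fun_supp[OF \<phi>] by blast
    obtain R2 where R2: "R2 \<ge> 0" "\<And>x. \<bar>x\<bar> > R2 \<Longrightarrow> deriv \<phi> x = 0" using test_fun_supp[OF d\<phi>] by blast
    define T where "T = R1 + R2 + 1"
    have ACphi: "ACrep \<phi> (deriv \<phi>)"
      by (rule AC_C1[OF smooth_has_deriv[OF sm] smooth_cont[OF smooth_deriv[OF sm]]])
    have ACp: "ACrep (\<lambda>t. U0 t * \<phi> t) (\<lambda>t. v t * \<phi> t + U0 t * deriv \<phi> t)"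
      by (rule AC_mult[OF AC0 ACphi])
    have "U0 T * \<phi> T - U0 (-T) * \<phi> (-T) = (LINT t:{-T..T}|lborel. v t * \<phi> t + U0 t * deriv \<phi> t)"
      using ACrep_eq[OF ACp, of "-T" T] R1 R2 unfolding T_def by simp
    moreover have "\<phi> T = 0" "\<phi> (-T) = 0" using R1 R2 unfolding T_def by auto
    moreover have "(LINT t:{-T..T}|lborel. v t * \<phi> t + U0 t * deriv \<phi> t) = (\<integral>t. v t * \<phi> t + U0 t * deriv \<phi> t \<partial>lborel)"
      unfolding set_lebesgue_integral_def
    proof (intro Bochner_Integration.integral_cong refl)
      fix t show "indicator {-T..T} t *\<^sub>R (v t * \<phi> t + U0 t * deriv \<phi> t) = v t * \<phi> t + U0 t * deriv \<phi> t"
      proof (cases "t \<in> {-T..T}")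
        case False then have "\<bar>t\<bar> > R1" "\<bar>t\<bar> > R2" unfolding T_def using R1 R2 by auto
        then show ?thesis using R1 R2 False by simp
      qed simp
    qed
    ultimately have z: "(\<integral>t. v t * \<phi> t + U0 t * deriv \<phi> t \<partial>lborel) = 0" by simp
    have i1: "integrable lborel (\<lambda>t. v t * \<phi> t)" by (rule test_loc_mult[OF vm vloc \<phi>])
    have i2: "integrable lborel (\<lambda>t. U0 t * deriv \<phi> t)" by (rule test_loc_mult[OF U0m U0loc d\<phi>])
    have i3: "integrable lborel (\<lambda>t. u t * deriv \<phi> t)" by (rule test_loc_mult[OF um uloc d\<phi>])
    have e1: "(\<integral>t. v t * \<phi> t \<partial>lborel) + (\<integral>t. U0 t * deriv \<phi> t \<partial>lborel) = 0"
      using z i1 i2 by simp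
    have e2: "(\<integral>t. u t * deriv \<phi> t \<partial>lborel) = - (\<integral>t. v t * \<phi> t \<partial>lborel)"
      using wd \<phi> unfolding weak_deriv_def by blast
    have "(\<integral>x. (u x - U0 x) * deriv \<phi> x \<partial>lborel) = (\<integral>x. u x * deriv \<phi> x - U0 x * deriv \<phi> x \<partial>lborel)"
      by (simp add: left_diff_distrib)
    also have "\<dots> = (\<integral>x. u x * deriv \<phi> x \<partial>lborel) - (\<integral>x. U0 x * deriv \<phi> x \<partial>lborel)"
      by (rule Bochner_Integration.integral_diff[OF i3 i2])
    finally show ?thesis using e1 e2 by simp
  qed
  have "\<exists>C. AE x in lborel. u x - U0 x = C"
  proof (rule du_bois_reymond)
    show "(\<lambda>x. u x - U0 x) \<in> borel_measurable lborel" by measurable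
    show "set_integrable lborel {a..b} (\<lambda>x. u x - U0 x)" for a b using uloc U0loc by (rule set_integral_diff)
    show "(\<integral>x. (u x - U0 x) * deriv \<phi> x \<partial>lborel) = 0" if "test_fun \<phi>" for \<phi> using key[OF that] .
  qed
  then obtain C where C: "AE x in lborel. u x - U0 x = C" by blast
  have "ACrep (\<lambda>x. U0 x + C) (\<lambda>x. v x + 0)" by (rule AC_add[OF AC0 AC_const])
  then have "ACrep (\<lambda>x. U0 x + C) v" by simp
  moreover have "AE x in lborel. u x = U0 x + C" using C by eventually_elim simp
  ultimately show ?thesis by blast
qed



lemma L2_meas: "L2 f \<Longrightarrow> f \<in> borel_measurable lborel" by (simp add: L2_def)
lemma L2_sq: "L2 f \<Longrightarrow> integrable lborel (\<lambda>x. (f x)^2)" by (simp add: L2_def)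

lemma int_bmult:
  fixes f c :: "real \<Rightarrow> real"
  assumes fi: "integrable lborel f" and cm: "c \<in> borel_measurable lborel" and B: "\<And>x. \<bar>c x\<bar> \<le> B"
  shows "integrable lborel (\<lambda>x. c x * f x)"
proof (rule Bochner_Integration.integrable_bound[where f="\<lambda>x. B * \<bar>f x\<bar>"])
  show "integrable lborel (\<lambda>x. B * \<bar>f x\<bar>)" using fi by (intro integrable_mult_right integrable_abs)
  show "(\<lambda>x. c x * f x) \<in> borel_measurable lborel" using fi cm by (intro borel_measurable_times) auto
  show "AE x in lborel. norm (c x * f x) \<le> norm (B * \<bar>f x\<bar>)"
  proof (rule AE_I2)
    fix x have "\<bar>c x\<bar> * \<bar>f x\<bar> \<le> B * \<bar>f x\<bar>" using B[of x] by (rule mult_right_mono) simp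
    also have "\<dots> \<le> \<bar>B * \<bar>f x\<bar>\<bar>" by simp
    finally show "norm (c x * f x) \<le> norm (B * \<bar>f x\<bar>)" by (simp add: abs_mult)
  qed
qed

lemma L2_prod:
  fixes f g :: "real \<Rightarrow> real"
  assumes "L2 f" "L2 g"
  shows "integrable lborel (\<lambda>x. f x * g x)"
proof (rule Bochner_Integration.integrable_bound[where f="\<lambda>x. (f x)^2 + (g x)^2"])
  show "integrable lborel (\<lambda>x. (f x)^2 + (g x)^2)" using assms by (simp add: L2_def)
  show "(\<lambda>x. f x * g x) \<in> borel_measurable lborel" using assms by (intro borel_measurable_times) (auto simp: L2_def)
  show "AE x in lborel. norm (f x * g x) \<le> norm ((f x)^2 + (g x)^2)"
  proof (rule AE_I2)
    fix x
    have "2 * \<bar>f x * g x\<bar> \<le> (f x)^2 + (g x)^2"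
      using sum_squares_bound[of "\<bar>f x\<bar>" "\<bar>g x\<bar>"] by (simp add: abs_mult power2_eq_square)
    then show "norm (f x * g x) \<le> norm ((f x)^2 + (g x)^2)" by simp
  qed
qed

lemma L2_add:
  fixes f g :: "real \<Rightarrow> real"
  assumes "L2 f" "L2 g"
  shows "L2 (\<lambda>x. f x + g x)"
  unfolding L2_def
proof
  show "(\<lambda>x. f x + g x) \<in> borel_measurable lborel" using assms by (intro borel_measurable_add) (auto simp: L2_def)
  have "integrable lborel (\<lambda>x. (f x)^2 + (g x)^2 + 2 * (f x * g x))"
    using assms L2_prod[OF assms] by (simp add: L2_def)
  then show "integrable lborel (\<lambda>x. (f x + g x)^2)" by (simp add: power2_sum mult.assoc)
qed

lemma L2_bmult:
  fixes f c :: "real \<Rightarrow> real"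
  assumes f: "L2 f" and cm: "c \<in> borel_measurable lborel" and B: "\<And>x. \<bar>c x\<bar> \<le> B"
  shows "L2 (\<lambda>x. c x * f x)"
  unfolding L2_def
proof
  show "(\<lambda>x. c x * f x) \<in> borel_measurable lborel" using f cm by (intro borel_measurable_times) (auto simp: L2_def)
  have "\<bar>(c x)^2\<bar> \<le> B^2" for x
  proof -
    have "\<bar>c x\<bar> \<le> \<bar>B\<bar>" using B[of x] by linarith
    then have "(c x)^2 \<le> B^2" by (simp add: abs_le_square_iff)
    then show ?thesis by simp
  qed
  then have "integrable lborel (\<lambda>x. (c x)^2 * (f x)^2)"
    using f cm by (intro int_bmult) (auto simp: L2_def)
  then show "integrable lborel (\<lambda>x. (c x * f x)^2)" by (simp add: power_mult_distrib)
qed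

lemma L2_congAE:
  assumes f: "L2 f" and gm: "g \<in> borel_measurable lborel" and ae: "AE x in lborel. f x = g x"
  shows "L2 g"
  unfolding L2_def
proof
  show "g \<in> borel_measurable lborel" by (rule gm)
  have "integrable lborel (\<lambda>x. (f x)^2) = integrable lborel (\<lambda>x. (g x)^2)"
    by (rule integrable_cong_AE) (use f gm ae in \<open>auto simp: L2_def elim: eventually_mono\<close>)
  then show "integrable lborel (\<lambda>x. (g x)^2)" using f by (simp add: L2_def)
qed

lemma L2_loc:
  fixes f :: "real \<Rightarrow> real"
  assumes f: "L2 f"
  shows "set_integrable lborel {a..b} f"
  unfolding set_integrable_def
proof (rule Bochner_Integration.integrable_bound[where f="\<lambda>x. indicator {a..b} x *\<^sub>R (1::real) + (f x)^2"])
  show "integrable lborel (\<lambda>x. indicator {a..b} x *\<^sub>R (1::real) + (f x)^2)"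
    using const_loc[of a b 1] f unfolding set_integrable_def by (simp add: L2_def)
  show "(\<lambda>x. indicator {a..b} x *\<^sub>R f x) \<in> borel_measurable lborel" using f by (intro borel_measurable_scaleR) (auto simp: L2_def)
  show "AE x in lborel. norm (indicator {a..b} x *\<^sub>R f x) \<le> norm (indicator {a..b} x *\<^sub>R (1::real) + (f x)^2)"
  proof (rule AE_I2)
    fix x
    have "\<bar>f x\<bar> \<le> 1 + (f x)^2"
    proof (cases "\<bar>f x\<bar> \<le> 1")
      case False then have "\<bar>f x\<bar> * 1 \<le> \<bar>f x\<bar> * \<bar>f x\<bar>" by (intro mult_left_mono) auto
      then have "\<bar>f x\<bar> \<le> \<bar>f x\<bar> * \<bar>f x\<bar>" by simp
      also have "\<dots> = (f x)^2" by (simp add: power2_eq_square abs_mult_self_eq)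
      finally show ?thesis by simp
    qed (simp add: zero_le_power2 add_increasing2)
    then show "norm (indicator {a..b} x *\<^sub>R f x) \<le> norm (indicator {a..b} x *\<^sub>R (1::real) + (f x)^2)"
      by (cases "x \<in> {a..b}") auto
  qed
qed

lemma u0_deriv: "(u0 has_real_derivative (1 - (u0 x)^2) * (1 / sqrt 2)) (at x)"
proof -
  have c: "cosh (x / sqrt 2) \<noteq> 0" using cosh_real_pos[of "x / sqrt 2"] by simp
  have d: "((\<lambda>x. x / sqrt 2) has_real_derivative 1 / sqrt 2) (at x)" by (rule DERIV_cdivide[OF DERIV_ident])
  have "((\<lambda>x. tanh (x / sqrt 2)) has_real_derivative (1 - (tanh (x / sqrt 2))^2) * (1 / sqrt 2)) (at x)"
    by (rule has_field_derivative_tanh[OF c d])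
  then show ?thesis unfolding u0_def[abs_def] by simp
qed

lemma u0_deriv'[derivative_intros]:
  "(u0 has_real_derivative (1 - (u0 x)^2) * (1 / sqrt 2)) (at x within S)"
  using u0_deriv by (rule has_field_derivative_at_within)

lemma u0_isCont: "isCont u0 x" using u0_deriv DERIV_isCont by blast

lemma u0_cont[continuous_intros]: "continuous_on S u0"
  using u0_isCont continuous_at_imp_continuous_on by blast

lemma u0_meas[measurable]: "u0 \<in> borel_measurable lborel"
  using u0_cont[of UNIV] borel_measurable_continuous_onI by simp

lemma u0_bound: "\<bar>u0 x\<bar> \<le> 1"
  using tanh_real_bounds[of "x / sqrt 2"] by (auto simp: u0_def)



lemma s2: "sqrt 2 * sqrt 2 = (2::real)" by simp

lemma s2': "sqrt 2 * (sqrt 2 * X) = (2::real) * X" by (simp add: mult.assoc[symmetric])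

lemma u0_deriv2: "(u0 has_real_derivative sqrt 2 * (1 - (u0 x)^2) / 2) (at x)"
proof (rule DERIV_cong[OF u0_deriv])
  have e: "1 / sqrt 2 = sqrt 2 / (2::real)"
    using sqrt_divide_self_eq[of 2] by (simp add: inverse_eq_divide)
  show "(1 - (u0 x)^2) * (1 / sqrt 2) = sqrt 2 * (1 - (u0 x)^2) / 2"
    unfolding e by simp
qed

lemma u0_deriv2'[derivative_intros]: "(u0 has_real_derivative sqrt 2 * (1 - (u0 x)^2) / 2) (at x within S)"
  using u0_deriv2 by (rule has_field_derivative_at_within)

lemma u0_sq: "0 \<le> (u0 x)^2" "(u0 x)^2 \<le> 1" "0 \<le> (u0 x)^4" "(u0 x)^4 \<le> 1"
proof -
  show "0 \<le> (u0 x)^2" by simp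
  show a: "(u0 x)^2 \<le> 1" using u0_bound[of x] by (simp add: abs_le_square_iff[of "u0 x" 1, simplified])
  show "0 \<le> (u0 x)^4" by (simp add: zero_le_even_power)
  have "(u0 x)^4 = (u0 x)^2 * (u0 x)^2" by algebra
  also have "\<dots> \<le> 1 * 1" using a by (intro mult_mono) auto
  finally show "(u0 x)^4 \<le> 1" by simp
qed

lemma AC_c1: "ACrep (\<lambda>x. sqrt 2 * u0 x) (\<lambda>x. 1 - (u0 x)^2)"
proof (rule AC_C1)
  show "((\<lambda>x. sqrt 2 * u0 x) has_real_derivative 1 - (u0 x)^2) (at x)" for x
    by (rule DERIV_cong[OF DERIV_cmult[OF u0_deriv2]]) (simp add: field_simps)
  show "continuous_on UNIV (\<lambda>x. 1 - (u0 x)^2)" by (intro continuous_intros)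
qed

lemma AC_c2: "ACrep (\<lambda>x. 2 * (1 - (u0 x)^2)) (\<lambda>x. - 2 * sqrt 2 * u0 x * (1 - (u0 x)^2))"
proof (rule AC_C1)
  show "((\<lambda>x. 2 * (1 - (u0 x)^2)) has_real_derivative - 2 * sqrt 2 * u0 x * (1 - (u0 x)^2)) (at x)" for x
    by (auto intro!: derivative_eq_intros)
  show "continuous_on UNIV (\<lambda>x. - 2 * sqrt 2 * u0 x * (1 - (u0 x)^2))" by (intro continuous_intros)
qed

lemma AC_c3: "ACrep (\<lambda>x. sqrt 2 * u0 x * (5 - 2 * (u0 x)^2)) (\<lambda>x. (5 - 6 * (u0 x)^2) * (1 - (u0 x)^2))"
proof (rule AC_C1)
  show "((\<lambda>x. sqrt 2 * u0 x * (5 - 2 * (u0 x)^2)) has_real_derivative (5 - 6 * (u0 x)^2) * (1 - (u0 x)^2)) (at x)" for x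
    by (auto intro!: derivative_eq_intros simp: algebra_simps s2') (simp add: field_simps; algebra)
  show "continuous_on UNIV (\<lambda>x. (5 - 6 * (u0 x)^2) * (1 - (u0 x)^2))" by (intro continuous_intros)
qed



lemma alg1:
  fixes s t U V :: real assumes "s * s = 2"
  shows "(1 - t^2) * (U * U) + s * t * (V * U + U * V) = (V + s * t * U)^2 - (V^2 + (3 * t^2 - 1) * U^2)"
proof -
  have e: "(V + s * t * U)^2 = V^2 + 2 * s * t * U * V + (s * s) * t^2 * U^2" by algebra
  show ?thesis unfolding e assms by algebra
qed

lemma alg2:
  fixes s t U V z :: real assumes "s * s = 2"
  shows "(1 - t^2) * (V * V) + s * t * (z * V + V * z)
    + ((- 2 * s * t * (1 - t^2)) * (U * V) + 2 * (1 - t^2) * (V * V + U * z)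
    + ((5 - 6 * t^2) * (1 - t^2) * (U * U) + s * t * (5 - 2 * t^2) * (V * U + U * V)))
   = (z + (1 - t^2) * U + s * t * V)^2 + 3 * (V + s * t * U)^2
     - (z^2 + 5 * t^2 * V^2 + (- 5 * t^4 + 15 * t^2 - 4) * U^2)"
proof -
  have e1: "(z + (1 - t^2) * U + s * t * V)^2 = z^2 + (1 - t^2)^2 * U^2 + (s * s) * t^2 * V^2
     + 2 * z * (1 - t^2) * U + 2 * s * t * z * V + 2 * s * t * (1 - t^2) * U * V" by algebra
  have e2: "(V + s * t * U)^2 = V^2 + 2 * s * t * U * V + (s * s) * t^2 * U^2" by algebra
  show ?thesis unfolding e1 e2 assms by algebra
qed



theorem corollary4p3:
  fixes c :: real and u u1 u2 :: "real \<Rightarrow> real"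
  assumes "H2 u u1 u2"
  defines "w \<equiv> (\<lambda>x. u1 x + sqrt 2 * u0 x * u x)"
  shows "(\<exists>w1. H1 w w1)
       \<and> (\<forall>w1. H1 w w1 \<longrightarrow>
            Kplus_form c u u1 u2
              = (\<integral>x. (w1 x)^2 \<partial>lborel) + (3 - c) * (\<integral>x. (w x)^2 \<partial>lborel))"
proof -
  have Lu: "L2 u" and Lu1: "L2 u1" and Lu2: "L2 u2" and wd1: "weak_deriv u u1" and wd2: "weak_deriv u1 u2"
    using assms(1) unfolding H2_def by auto
  have um[measurable]: "u \<in> borel_measurable lborel" by (rule L2_meas[OF Lu])
  have u1m[measurable]: "u1 \<in> borel_measurable lborel" by (rule L2_meas[OF Lu1])
  have u2m[measurable]: "u2 \<in> borel_measurable lborel" by (rule L2_meas[OF Lu2])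
  obtain U where AU: "ACrep U u1" and eU: "AE x in lborel. u x = U x" using weak_rep[OF um u1m wd1] by blast
  obtain V where AV: "ACrep V u2" and eV: "AE x in lborel. u1 x = V x" using weak_rep[OF u1m u2m wd2] by blast
  have Um[measurable]: "U \<in> borel_measurable lborel" by (rule AC_meas[OF AU])
  have Vm[measurable]: "V \<in> borel_measurable lborel" by (rule AC_meas[OF AV])
  have AUV: "ACrep U V" by (rule AC_congAE[OF AU u1m Vm eV])
  have LU: "L2 U" by (rule L2_congAE[OF Lu Um eU])
  have LV: "L2 V" by (rule L2_congAE[OF Lu1 Vm eV])
  define W where "W x = V x + sqrt 2 * u0 x * U x" for x
  define W1 where "W1 x = u2 x + (1 - (u0 x)^2) * U x + sqrt 2 * u0 x * V x" for x
  have Wm[measurable]: "W \<in> borel_measurable lborel" unfolding W_def[abs_def] by measurable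
  have W1m[measurable]: "W1 \<in> borel_measurable lborel" unfolding W1_def[abs_def] by measurable
  have wm[measurable]: "w \<in> borel_measurable lborel" unfolding w_def by measurable
  have eW: "AE x in lborel. W x = w x" using eU eV by eventually_elim (simp add: w_def W_def)
  have bc1: "\<bar>sqrt 2 * u0 x\<bar> \<le> sqrt 2" for x using u0_bound[of x] by (simp add: abs_mult)
  have bh: "\<bar>1 - (u0 x)^2\<bar> \<le> 1" for x using u0_sq[of x] by simp
  have LW: "L2 W"
    using L2_add[OF LV L2_bmult[OF LU _ bc1]] unfolding W_def[abs_def] by simp
  have LW1: "L2 W1"
    using L2_add[OF L2_add[OF Lu2 L2_bmult[OF LU _ bh]] L2_bmult[OF LV _ bc1]]
    unfolding W1_def[abs_def] by simp
  have Lw: "L2 w" by (rule L2_congAE[OF LW wm eW])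
  have AW: "ACrep W W1"
  proof -
    have "ACrep (\<lambda>x. V x + sqrt 2 * u0 x * U x) (\<lambda>x. u2 x + ((1 - (u0 x)^2) * U x + sqrt 2 * u0 x * V x))"
      by (rule AC_add[OF AV AC_mult[OF AC_c1 AUV]])
    then show ?thesis unfolding W_def[abs_def] W1_def[abs_def] by (simp add: add.assoc)
  qed
  have Wloc: "set_integrable lborel {a..b} W" for a b by (rule cont_loc[OF AC_cont[OF AW]])
  have W1loc: "set_integrable lborel {a..b} W1" for a b by (rule L2_loc[OF LW1])
  have wdW: "weak_deriv w W1"
    unfolding weak_deriv_def
  proof (intro conjI allI impI)
    fix a b show "set_integrable lborel {a..b} w" by (rule L2_loc[OF Lw])
    show "set_integrable lborel {a..b} W1" by (rule W1loc)
  next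
    fix \<phi> assume \<phi>: "test_fun \<phi>"
    have sm: "smooth \<phi>" by (rule test_fun_smooth[OF \<phi>])
    have d\<phi>: "test_fun (deriv \<phi>)" by (rule test_fun_deriv[OF \<phi>])
    have ACphi: "ACrep \<phi> (deriv \<phi>)"
      by (rule AC_C1[OF smooth_has_deriv[OF sm] smooth_cont[OF smooth_deriv[OF sm]]])
    have AF: "ACrep (\<lambda>x. W x * \<phi> x) (\<lambda>x. W1 x * \<phi> x + W x * deriv \<phi> x)"
      by (rule AC_mult[OF AW ACphi])
    have i1: "integrable lborel (\<lambda>x. W1 x * \<phi> x)" by (rule test_loc_mult[OF W1m W1loc \<phi>])
    have i2: "integrable lborel (\<lambda>x. W x * deriv \<phi> x)" by (rule test_loc_mult[OF Wm Wloc d\<phi>])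
    have i3: "integrable lborel (\<lambda>x. W x * \<phi> x)" by (rule test_loc_mult[OF Wm Wloc \<phi>])
    have "(\<integral>x. W1 x * \<phi> x + W x * deriv \<phi> x \<partial>lborel) = 0"
      by (rule AC_integral_zero[OF AF _ i3]) (use i1 i2 in simp)
    then have e1: "(\<integral>x. W x * deriv \<phi> x \<partial>lborel) = - (\<integral>x. W1 x * \<phi> x \<partial>lborel)"
      using i1 i2 by simp
    have "(\<integral>x. w x * deriv \<phi> x \<partial>lborel) = (\<integral>x. W x * deriv \<phi> x \<partial>lborel)"
    proof (rule integral_cong_AE)
      show "(\<lambda>x. w x * deriv \<phi> x) \<in> borel_measurable lborel"
        using smooth_meas[OF test_fun_smooth[OF d\<phi>]] by measurable
      show "(\<lambda>x. W x * deriv \<phi> x) \<in> borel_measurable lborel"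
        using smooth_meas[OF test_fun_smooth[OF d\<phi>]] by measurable
      show "AE x in lborel. w x * deriv \<phi> x = W x * deriv \<phi> x" using eW by eventually_elim simp
    qed
    then show "(\<integral>x. w x * deriv \<phi> x \<partial>lborel) = - (\<integral>x. W1 x * \<phi> x \<partial>lborel)" using e1 by simp
  qed
  have H1W: "H1 w W1" unfolding H1_def using Lw LW1 wdW by blast
  define K where "K x = (u2 x)^2 + 5 * (u0 x)^2 * (V x)^2 + (- 5 * (u0 x)^4 + 15 * (u0 x)^2 - 4) * (U x)^2" for x
  define Kc where "Kc x = (V x)^2 + (3 * (u0 x)^2 - 1) * (U x)^2" for x
  have KP: "Kplus_form c u u1 u2 = (\<integral>x. K x \<partial>lborel) - c * (\<integral>x. Kc x \<partial>lborel)"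
  proof -
    have "(\<integral>x. (u2 x)^2 + 5 * (u0 x)^2 * (u1 x)^2 + (- 5 * (u0 x)^4 + 15 * (u0 x)^2 - 4) * (u x)^2 \<partial>lborel)
        = (\<integral>x. K x \<partial>lborel)"
      unfolding K_def by (rule integral_cong_AE) (use eU eV in \<open>auto elim: eventually_elim2\<close>)
    moreover have "(\<integral>x. (u1 x)^2 + (3 * (u0 x)^2 - 1) * (u x)^2 \<partial>lborel) = (\<integral>x. Kc x \<partial>lborel)"
      unfolding Kc_def by (rule integral_cong_AE) (use eU eV in \<open>auto elim: eventually_elim2\<close>)
    ultimately show ?thesis unfolding Kplus_form_def by simp
  qed
  have ww: "(\<integral>x. (w x)^2 \<partial>lborel) = (\<integral>x. (W x)^2 \<partial>lborel)"
    by (rule integral_cong_AE) (use eW in \<open>auto elim: eventually_mono\<close>)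
  have iW: "integrable lborel (\<lambda>x. (W x)^2)" by (rule L2_sq[OF LW])
  have iW1: "integrable lborel (\<lambda>x. (W1 x)^2)" by (rule L2_sq[OF LW1])
  have b5: "\<bar>5 * (u0 x)^2\<bar> \<le> 5" for x using u0_sq[of x] by simp
  have b24: "\<bar>- 5 * (u0 x)^4 + 15 * (u0 x)^2 - 4\<bar> \<le> 24" for x using u0_sq[of x] unfolding abs_le_iff by linarith
  have b3: "\<bar>3 * (u0 x)^2 - 1\<bar> \<le> 2" for x using u0_sq[of x] unfolding abs_le_iff by linarith
  have iK: "integrable lborel K"
  proof -
    have "integrable lborel (\<lambda>x. (u2 x)^2 + 5 * (u0 x)^2 * (V x)^2 + (- 5 * (u0 x)^4 + 15 * (u0 x)^2 - 4) * (U x)^2)"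
      using L2_sq[OF Lu2] int_bmult[OF L2_sq[OF LV] _ b5] int_bmult[OF L2_sq[OF LU] _ b24] by simp
    then show ?thesis unfolding K_def[abs_def] .
  qed
  have iKc: "integrable lborel Kc"
  proof -
    have "integrable lborel (\<lambda>x. (V x)^2 + (3 * (u0 x)^2 - 1) * (U x)^2)"
      using L2_sq[OF LV] int_bmult[OF L2_sq[OF LU] _ b3] by simp
    then show ?thesis unfolding Kc_def[abs_def] .
  qed
  have I1: "(\<integral>x. (W x)^2 - Kc x \<partial>lborel) = 0"
  proof -
    have A1: "ACrep (\<lambda>x. sqrt 2 * u0 x * (U x * U x))
       (\<lambda>x. (1 - (u0 x)^2) * (U x * U x) + sqrt 2 * u0 x * (V x * U x + U x * V x))"
      by (rule AC_mult[OF AC_c1 AC_mult[OF AUV AUV]])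
    have "(\<lambda>x. (1 - (u0 x)^2) * (U x * U x) + sqrt 2 * u0 x * (V x * U x + U x * V x))
        = (\<lambda>x. (W x)^2 - Kc x)"
      unfolding W_def Kc_def by (intro ext alg1 s2)
    then have A1': "ACrep (\<lambda>x. sqrt 2 * u0 x * (U x * U x)) (\<lambda>x. (W x)^2 - Kc x)" using A1 by simp
    show ?thesis
    proof (rule AC_integral_zero[OF A1'])
      show "integrable lborel (\<lambda>x. (W x)^2 - Kc x)" using iW iKc by simp
      show "integrable lborel (\<lambda>x. sqrt 2 * u0 x * (U x * U x))"
        by (rule int_bmult[OF L2_prod[OF LU LU] _ bc1]) simp
    qed
  qed
  have I2: "(\<integral>x. (W1 x)^2 + 3 * (W x)^2 - K x \<partial>lborel) = 0"
  proof -
    have AUU: "ACrep (\<lambda>x. U x * U x) (\<lambda>x. V x * U x + U x * V x)" by (rule AC_mult[OF AUV AUV])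
    have AUV2: "ACrep (\<lambda>x. U x * V x) (\<lambda>x. V x * V x + U x * u2 x)" by (rule AC_mult[OF AUV AV])
    have AVV: "ACrep (\<lambda>x. V x * V x) (\<lambda>x. u2 x * V x + V x * u2 x)" by (rule AC_mult[OF AV AV])
    have A2: "ACrep (\<lambda>x. sqrt 2 * u0 x * (V x * V x) + (2 * (1 - (u0 x)^2) * (U x * V x)
          + sqrt 2 * u0 x * (5 - 2 * (u0 x)^2) * (U x * U x)))
       (\<lambda>x. (1 - (u0 x)^2) * (V x * V x) + sqrt 2 * u0 x * (u2 x * V x + V x * u2 x)
          + ((- 2 * sqrt 2 * u0 x * (1 - (u0 x)^2)) * (U x * V x) + 2 * (1 - (u0 x)^2) * (V x * V x + U x * u2 x)
          + ((5 - 6 * (u0 x)^2) * (1 - (u0 x)^2) * (U x * U x)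
             + sqrt 2 * u0 x * (5 - 2 * (u0 x)^2) * (V x * U x + U x * V x))))"
      by (rule AC_add[OF AC_mult[OF AC_c1 AVV] AC_add[OF AC_mult[OF AC_c2 AUV2] AC_mult[OF AC_c3 AUU]]])
    have "(\<lambda>x. (1 - (u0 x)^2) * (V x * V x) + sqrt 2 * u0 x * (u2 x * V x + V x * u2 x)
          + ((- 2 * sqrt 2 * u0 x * (1 - (u0 x)^2)) * (U x * V x) + 2 * (1 - (u0 x)^2) * (V x * V x + U x * u2 x)
          + ((5 - 6 * (u0 x)^2) * (1 - (u0 x)^2) * (U x * U x)
             + sqrt 2 * u0 x * (5 - 2 * (u0 x)^2) * (V x * U x + U x * V x))))
        = (\<lambda>x. (W1 x)^2 + 3 * (W x)^2 - K x)"
      unfolding W_def W1_def K_def by (intro ext alg2 s2)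
    then have A2': "ACrep (\<lambda>x. sqrt 2 * u0 x * (V x * V x) + (2 * (1 - (u0 x)^2) * (U x * V x)
          + sqrt 2 * u0 x * (5 - 2 * (u0 x)^2) * (U x * U x))) (\<lambda>x. (W1 x)^2 + 3 * (W x)^2 - K x)"
      using A2 by simp
    have b2: "\<bar>2 * (1 - (u0 x)^2)\<bar> \<le> 2" for x using u0_sq[of x] by simp
    have b7: "\<bar>sqrt 2 * u0 x * (5 - 2 * (u0 x)^2)\<bar> \<le> sqrt 2 * 5" for x
    proof -
      have "\<bar>u0 x * (5 - 2 * (u0 x)^2)\<bar> \<le> 1 * 5"
        unfolding abs_mult using u0_bound[of x] u0_sq[of x] by (intro mult_mono) (auto simp: abs_le_iff)
      then show ?thesis by (simp add: abs_mult mult.assoc)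
    qed
    show ?thesis
    proof (rule AC_integral_zero[OF A2'])
      show "integrable lborel (\<lambda>x. (W1 x)^2 + 3 * (W x)^2 - K x)" using iW iW1 iK by simp
      have j1: "integrable lborel (\<lambda>x. sqrt 2 * u0 x * (V x * V x))"
        by (rule int_bmult[OF L2_prod[OF LV LV] _ bc1]) simp
      have j2: "integrable lborel (\<lambda>x. 2 * (1 - (u0 x)^2) * (U x * V x))"
        by (rule int_bmult[OF L2_prod[OF LU LV] _ b2]) simp
      have j3: "integrable lborel (\<lambda>x. sqrt 2 * u0 x * (5 - 2 * (u0 x)^2) * (U x * U x))"
        by (rule int_bmult[OF L2_prod[OF LU LU] _ b7]) simp
      show "integrable lborel (\<lambda>x. sqrt 2 * u0 x * (V x * V x) + (2 * (1 - (u0 x)^2) * (U x * V x)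
          + sqrt 2 * u0 x * (5 - 2 * (u0 x)^2) * (U x * U x)))"
        using j1 j2 j3 by simp
    qed
  qed
  have I1': "(\<integral>x. (W x)^2 \<partial>lborel) = (\<integral>x. Kc x \<partial>lborel)"
    using I1 iW iKc by simp
  have I2': "(\<integral>x. K x \<partial>lborel) = (\<integral>x. (W1 x)^2 \<partial>lborel) + 3 * (\<integral>x. (W x)^2 \<partial>lborel)"
  proof -
    have "(\<integral>x. (W1 x)^2 + 3 * (W x)^2 - K x \<partial>lborel)
       = (\<integral>x. (W1 x)^2 \<partial>lborel) + 3 * (\<integral>x. (W x)^2 \<partial>lborel) - (\<integral>x. K x \<partial>lborel)"
      using iW iW1 iK by simp
    then show ?thesis using I2 by simp
  qed
  have main: "Kplus_form c u u1 u2 = (\<integral>x. (W1 x)^2 \<partial>lborel) + (3 - c) * (\<integral>x. (w x)^2 \<partial>lborel)"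
    unfolding KP ww using I1' I2' by (simp add: algebra_simps)
  show ?thesis
  proof (intro conjI exI allI impI)
    show "H1 w W1" by (rule H1W)
    fix w1 assume h: "H1 w w1"
    have Lw1: "L2 w1" and wd': "weak_deriv w w1" using h unfolding H1_def by auto
    have "AE x in lborel. w1 x = W1 x"
      by (rule weak_deriv_unique[OF L2_meas[OF Lw1] W1m wd' wdW])
    then have "(\<integral>x. (w1 x)^2 \<partial>lborel) = (\<integral>x. (W1 x)^2 \<partial>lborel)"
      by (intro integral_cong_AE) (use L2_meas[OF Lw1] in \<open>auto elim: eventually_mono\<close>)
    then show "Kplus_form c u u1 u2 = (\<integral>x. (w1 x)^2 \<partial>lborel) + (3 - c) * (\<integral>x. (w x)^2 \<partial>lborel)"
      using main by simp
  qed
qed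


end
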